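(* Let $V, W$ be real Banach spaces, let $f \in C^1([0,\infty) \times V, V)$, and let $\Theta \in C^1([0,\infty) \times V, GL(V,W))$ satisfy $$\sup_{t \ge 0,\, u \in V} \max\big(\|\Theta(t,u)\|, \|\Theta(t,u)^{-1}\|\big) = C < \infty.$$ For $t \ge 0$ and $u \in V$, let $$G(t,u) := \partial_t \Theta(t,u) + D_u\Theta(t,u)[f(t,u)] + \Theta(t,u)\, D_u f(t,u) \in \mathcal{B}(V,W),$$ and suppose that for some $\lambda \in \mathbb{R}$, $$\sup_{t \ge 0,\, u \in V}\; M\big(G(t,u)\, \Theta(t,u)^{-1}\big) \le \lambda,$$ where $M$ is computed in $W$. Then any two solutions $u_1, u_2$ of $\dot u = f(t,u)$ satisfy $$\|u_1(t) - u_2(t)\| \le C^2 e^{\lambda t} \|u_1(0) - u_2(0)\| \quad \text{for all } t \ge 0.$$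
   Context: For a real Banach space $X$, the right semi-inner product is $(u,v)_+ := \|u\| \lim_{h \to 0^+} \frac{\|u + hv\| - \|u\|}{h}$. For a bounded linear operator $A: X \to X$, $M(A) := \sup_{v \ne 0} \frac{(v, Av)_+}{\|v\|^2}$. $GL(V,W)$ is the set of bijective bounded linear operators $V \to W$. $D$ denotes the Fréchet derivative, and $D_u\Theta(t,u)[h]$ is the derivative of $\Theta$ in $u$ applied to $h$. The operator $G(t,u)$ is the derivative along solutions: $\frac{d}{dt}[\Theta(t,u(t))\,\delta u(t)] = G(t,u(t))\,\delta u(t)$ whenever $\dot{\delta u} = D_u f(t,u(t))\,\delta u$. Solutions are continuously differentiable curves $[0,\infty) \to V$ satisfying the equation. *)

theory Defs
  imports "HOL-Analysis.Analysis"
begin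

definition rsip :: "'a::real_normed_vector \<Rightarrow> 'a \<Rightarrow> real" where
  "rsip u v = norm u * Lim (at_right 0) (\<lambda>h::real. (norm (u + h *\<^sub>R v) - norm u) / h)"

definition logM :: "('a::real_normed_vector \<Rightarrow> 'a) \<Rightarrow> real" where
  "logM A = (SUP v\<in>-{0}. rsip v (A v) / (norm v)\<^sup>2)"

text \<open>G(t,u) = d_t Theta(t,u) + D_u Theta(t,u)[f(t,u)] + Theta(t,u) o D_u f(t,u),
  where Theta' and f' are the full Frechet derivatives in (t,u).\<close>
definition Gop ::
  "(real \<times> 'v::real_normed_vector \<Rightarrow> 'v)
   \<Rightarrow> (real \<times> 'v \<Rightarrow> ('v \<Rightarrow>\<^sub>L 'w::real_normed_vector))
   \<Rightarrow> (real \<times> 'v \<Rightarrow> (real \<times> 'v) \<Rightarrow>\<^sub>L ('v \<Rightarrow>\<^sub>L 'w))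
   \<Rightarrow> (real \<times> 'v \<Rightarrow> (real \<times> 'v) \<Rightarrow>\<^sub>L 'v)
   \<Rightarrow> real \<Rightarrow> 'v \<Rightarrow> 'v \<Rightarrow> 'w" where
  "Gop f \<Theta> \<Theta>' f' t u = (\<lambda>v.
      blinfun_apply (blinfun_apply (\<Theta>' (t,u)) (1, 0)) v
    + blinfun_apply (blinfun_apply (\<Theta>' (t,u)) (0, f (t,u))) v
    + blinfun_apply (\<Theta> (t,u)) (blinfun_apply (f' (t,u)) (0, v)))"

end

theory Submission
  imports Defs
begin

lemma linear_inv_bij:
  assumes "linear T" "bij T"
  shows "linear (inv T)"
proof -
  have TI: "T (inv T y) = y" for y using assms(2) by (simp add: bij_is_surj surj_f_inv_f)
  have IT: "inv T (T x) = x" for x using assms(2) by (simp add: bij_is_inj)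
  show ?thesis
  proof (rule linearI)
    fix a b
    have "inv T (a + b) = inv T (T (inv T a) + T (inv T b))" by (simp add: TI)
    also have "\<dots> = inv T a + inv T b" using linear_add[OF assms(1)] IT by metis
    finally show "inv T (a + b) = inv T a + inv T b" .
  next
    fix r a
    have "inv T (r *\<^sub>R a) = inv T (r *\<^sub>R T (inv T a))" by (simp add: TI)
    also have "\<dots> = r *\<^sub>R inv T a" using linear_scale[OF assms(1)] IT by metis
    finally show "inv T (r *\<^sub>R a) = r *\<^sub>R inv T a" .
  qed
qed

lemma baire_some_interior:
  fixes F :: "nat \<Rightarrow> 'a::banach set"
  assumes "\<And>n. closed (F n)" "(\<Union>n. F n) = UNIV"
  shows "\<exists>n. interior (F n) \<noteq> {}"
proof (rule ccontr)
  assume "\<not> ?thesis"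
  then have "\<And>T. T \<in> range F \<Longrightarrow> closedin Met_TC.mtopology T \<and> Met_TC.mtopology interior_of T = {}"
    using assms(1) by (auto simp: interior_of_def interior_def)
  then have "Met_TC.mtopology interior_of \<Union>(range F) = {}"
    by (intro Met_TC.metric_Baire_category_alt) (auto simp: complete_UNIV)
  then show False using assms(2) by (simp add: interior_of_def interior_def) (metis UNIV_I open_UNIV)
qed

lemma bounded_inverse:
  fixes T :: "'a::banach \<Rightarrow> 'b::banach"
  assumes bl: "bounded_linear T" and bij: "bij T"
  shows "bounded_linear (inv T)"
proof -
  have lin: "linear T" using bl bounded_linear.linear by blast
  have TI: "T (inv T y) = y" for y using bij by (simp add: bij_is_surj surj_f_inv_f)
  have IT: "inv T (T x) = x" for x using bij by (simp add: bij_is_inj)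
  have cT: "continuous_on UNIV T" using bl linear_continuous_on by blast
  define F where "F n = closure (T ` cball 0 (real n))" for n
  have "\<exists>n. interior (F n) \<noteq> {}"
  proof (rule baire_some_interior)
    show "closed (F n)" for n unfolding F_def by simp
    show "(\<Union>n. F n) = UNIV"
    proof -
      have "y \<in> F (nat \<lceil>norm (inv T y)\<rceil>)" for y
      proof -
        have "inv T y \<in> cball 0 (real (nat \<lceil>norm (inv T y)\<rceil>))"
          by simp
        then have "y \<in> T ` cball 0 (real (nat \<lceil>norm (inv T y)\<rceil>))"
          by (rule image_eqI[where f=T, OF TI[of y, symmetric]])
        then show ?thesis unfolding F_def by (rule subsetD[OF closure_subset])
      qed
      then show ?thesis by auto
    qed
  qed
  then obtain n y0 where "y0 \<in> interior (F n)" by blast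
  then obtain r where r0: "r > 0" "ball y0 r \<subseteq> interior (F n)"
    using open_contains_ball open_interior by blast
  then have r: "r > 0" "ball y0 r \<subseteq> F n" using interior_subset by auto
  have y0F: "y0 \<in> F n" using r by auto
  have approx: "\<exists>x. norm x \<le> 2 * real n \<and> norm (T x - y) < e" if "norm y < r" "e > 0" for y e
  proof -
    have "y0 + y \<in> F n" using r that by (auto simp: dist_norm)
    then have c1: "\<forall>\<epsilon>>0. \<exists>z\<in>T ` cball 0 (real n). dist z (y0 + y) < \<epsilon>"
      unfolding F_def closure_approachable .
    have "\<exists>z\<in>T ` cball 0 (real n). dist z (y0 + y) < e/2"
      using c1[rule_format, of "e/2"] \<open>e > 0\<close> by simp
    then obtain x1 where x1: "x1 \<in> cball 0 (real n)" "dist (T x1) (y0 + y) < e/2"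
      by blast
    have c2: "\<forall>\<epsilon>>0. \<exists>z\<in>T ` cball 0 (real n). dist z y0 < \<epsilon>"
      using y0F unfolding F_def closure_approachable .
    have "\<exists>z\<in>T ` cball 0 (real n). dist z y0 < e/2"
      using c2[rule_format, of "e/2"] \<open>e > 0\<close> by simp
    then obtain x2 where x2: "x2 \<in> cball 0 (real n)" "dist (T x2) y0 < e/2"
      by blast
    have "norm (x1 - x2) \<le> norm x1 + norm x2" by (rule norm_triangle_ineq4)
    also have "\<dots> \<le> 2 * real n" using x1 x2 by simp
    finally have A: "norm (x1 - x2) \<le> 2 * real n" .
    have "T (x1 - x2) - y = (T x1 - (y0 + y)) - (T x2 - y0)"
      using linear_diff[OF lin] by (simp add: algebra_simps)
    then have "norm (T (x1 - x2) - y) \<le> norm (T x1 - (y0 + y)) + norm (T x2 - y0)"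
      using norm_triangle_ineq4[of "T x1 - (y0 + y)" "T x2 - y0"] by metis
    also have "\<dots> < e" using x1 x2 by (simp add: dist_norm)
    finally show ?thesis using A by blast
  qed
  define K where "K = 4 * real n / r"
  have K0: "K \<ge> 0" unfolding K_def using r by simp
  have scaled: "\<exists>x. norm x \<le> K * norm y \<and> norm (T x - y) < e" if "e > 0" for y e
  proof (cases "y = 0")
    case True
    then show ?thesis using that linear_0[OF lin] by (intro exI[of _ 0]) simp
  next
    case False
    define c where "c = r / (2 * norm y)"
    have c0: "c > 0" unfolding c_def using r False by simp
    have "norm (c *\<^sub>R y) < r" unfolding c_def using r False by simp
    then obtain x' where x': "norm x' \<le> 2 * real n" "norm (T x' - c *\<^sub>R y) < c * e"
      using approx c0 \<open>e > 0\<close> by (meson mult_pos_pos)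
    define x where "x = (1/c) *\<^sub>R x'"
    have "norm x = norm x' / c" unfolding x_def using c0 by simp
    also have "\<dots> \<le> 2 * real n / c" using x'(1) c0 by (simp add: divide_right_mono)
    also have "\<dots> = K * norm y" unfolding K_def c_def using r False by (simp add: field_simps)
    finally have A: "norm x \<le> K * norm y" .
    have "T x - y = (1/c) *\<^sub>R (T x' - c *\<^sub>R y)"
      unfolding x_def using c0 linear_scale[OF lin] by (simp add: algebra_simps)
    then have "norm (T x - y) = norm (T x' - c *\<^sub>R y) / c" using c0 by simp
    also have "\<dots> < e" using x'(2) c0 by (simp add: field_simps)
    finally show ?thesis using A by blast
  qed
  have "\<forall>y. \<exists>x. norm x \<le> K * norm y \<and> norm (T x - y) \<le> norm y / 2"
  proof
    fix y :: 'b
    show "\<exists>x. norm x \<le> K * norm y \<and> norm (T x - y) \<le> norm y / 2"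
    proof (cases "y = 0")
      case True
      then show ?thesis using linear_0[OF lin] by (intro exI[of _ 0]) simp
    next
      case False
      then show ?thesis using scaled[of "norm y / 2" y] by (auto intro: less_imp_le)
    qed
  qed
  then obtain g where g: "\<And>y. norm (g y) \<le> K * norm y" "\<And>y. norm (T (g y) - y) \<le> norm y / 2"
    by metis
  have main: "norm (inv T y) \<le> norm y * (2 * K)" for y
  proof -
    define ys where "ys k = ((\<lambda>z. z - T (g z)) ^^ k) y" for k
    have ys0: "ys 0 = y" and ysS: "ys (Suc k) = ys k - T (g (ys k))" for k
      unfolding ys_def by simp_all
    have ysb: "norm (ys k) \<le> norm y / 2 ^ k" for k
    proof (induction k)
      case 0 then show ?case by (simp add: ys0)
    next
      case (Suc k)
      have "norm (ys (Suc k)) = norm (T (g (ys k)) - ys k)" by (simp add: ysS norm_minus_commute)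
      also have "\<dots> \<le> norm (ys k) / 2" by (rule g(2))
      also have "\<dots> \<le> norm y / 2 ^ Suc k" using Suc by simp
      finally show ?case .
    qed
    define xs where "xs k = g (ys k)" for k
    have xsb: "norm (xs k) \<le> K * norm y * (1/2) ^ k" for k
    proof -
      have "norm (xs k) \<le> K * norm (ys k)" unfolding xs_def by (rule g(1))
      also have "\<dots> \<le> K * (norm y / 2 ^ k)" using ysb[of k] K0 by (rule mult_left_mono)
      also have "\<dots> = K * norm y * (1/2) ^ k" by (simp add: power_one_over)
      finally show ?thesis .
    qed
    have sg: "summable (\<lambda>k. K * norm y * (1/2::real) ^ k)"
      by (intro summable_mult summable_geometric) simp
    have sn: "summable (\<lambda>k. norm (xs k))"
      by (rule summable_comparison_test[OF _ sg]) (use xsb in simp)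
    have sx: "summable xs" using sn summable_norm_cancel by blast
    have psum: "(\<Sum>k<N. T (xs k)) = y - ys N" for N
      by (induction N) (simp_all add: ys0 ysS xs_def)
    have "ys \<longlonglongrightarrow> 0"
    proof (rule tendsto_norm_zero_cancel, rule Lim_null_comparison[where g="\<lambda>k. norm y / 2 ^ k"])
      show "\<forall>\<^sub>F k in sequentially. norm (norm (ys k)) \<le> norm y / 2 ^ k" using ysb by simp
      show "(\<lambda>k. norm y / 2 ^ k) \<longlonglongrightarrow> 0"
        by (intro LIMSEQ_divide_realpow_zero) auto
    qed
    then have "(\<lambda>N. y - ys N) \<longlonglongrightarrow> y - 0" by (intro tendsto_intros)
    then have "(\<lambda>k. T (xs k)) sums y" unfolding sums_def psum by simp
    then have "T (suminf xs) = y"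
    proof -
      have "T (suminf xs) = (\<Sum>k. T (xs k))" by (rule bounded_linear.suminf[OF bl sx])
      also have "\<dots> = y" using \<open>(\<lambda>k. T (xs k)) sums y\<close> by (simp add: sums_iff)
      finally show ?thesis .
    qed
    then have "inv T y = suminf xs" using IT[of "suminf xs"] by simp
    then have "norm (inv T y) \<le> (\<Sum>k. norm (xs k))" using summable_norm[OF sn] by simp
    also have "\<dots> \<le> (\<Sum>k. K * norm y * (1/2::real) ^ k)"
      by (rule suminf_le[OF _ sn sg]) (use xsb in simp)
    also have "\<dots> = norm y * (2 * K)"
      by (simp add: suminf_mult suminf_geometric)
    finally show ?thesis .
  qed
  show ?thesis
  proof (rule bounded_linear_intro[where K="2*K"])
    have l: "linear (inv T)" by (rule linear_inv_bij[OF lin bij])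
    show "inv T (x + y) = inv T x + inv T y" for x y by (rule linear_add[OF l])
    show "inv T (r *\<^sub>R x) = r *\<^sub>R inv T x" for r x by (rule linear_scale[OF l])
    show "norm (inv T x) \<le> norm x * (2 * K)" for x by (rule main)
  qed
qed



definition dq :: "'a::real_normed_vector \<Rightarrow> 'a \<Rightarrow> real \<Rightarrow> real" where
  "dq u v h = (norm (u + h *\<^sub>R v) - norm u) / h"

lemma dq_mono:
  assumes "0 < h1" "h1 \<le> h2"
  shows "dq u v h1 \<le> dq u v h2"
proof -
  define c where "c = h1 / h2"
  have h2: "h2 > 0" using assms by simp
  have c: "0 < c" "c \<le> 1" unfolding c_def using assms by auto
  have "u + h1 *\<^sub>R v = (1 - c) *\<^sub>R u + c *\<^sub>R (u + h2 *\<^sub>R v)"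
    unfolding c_def using h2 by (simp add: algebra_simps)
  then have "norm (u + h1 *\<^sub>R v) \<le> norm ((1 - c) *\<^sub>R u) + norm (c *\<^sub>R (u + h2 *\<^sub>R v))"
    using norm_triangle_ineq by metis
  also have "\<dots> = (1 - c) * norm u + c * norm (u + h2 *\<^sub>R v)" using c by simp
  finally have "norm (u + h1 *\<^sub>R v) - norm u \<le> c * (norm (u + h2 *\<^sub>R v) - norm u)"
    by (simp add: algebra_simps)
  then have "(norm (u + h1 *\<^sub>R v) - norm u) / h1 \<le> c * (norm (u + h2 *\<^sub>R v) - norm u) / h1"
    using assms by (simp add: divide_right_mono)
  also have "\<dots> = (norm (u + h2 *\<^sub>R v) - norm u) / h2"
    unfolding c_def using assms by (simp add: field_simps)
  finally show ?thesis unfolding dq_def .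
qed

lemma dq_bounds:
  assumes "0 < h"
  shows "- norm v \<le> dq u v h" "dq u v h \<le> norm v"
proof -
  have a: "norm (u + h *\<^sub>R v) \<le> norm u + h * norm v"
    using norm_triangle_ineq[of u "h *\<^sub>R v"] assms by simp
  have b: "norm u - h * norm v \<le> norm (u + h *\<^sub>R v)"
    using norm_triangle_ineq2[of u "- (h *\<^sub>R v)"] assms by simp
  show "dq u v h \<le> norm v" unfolding dq_def using a assms by (simp add: divide_le_eq mult.commute)
  show "- norm v \<le> dq u v h" unfolding dq_def using b assms by (simp add: le_divide_eq mult.commute)
qed

lemma dq_tendsto:
  "(dq u v \<longlongrightarrow> Inf (dq u v ` {0<..})) (at_right 0)"
proof (rule order_tendstoI)
  let ?L = "Inf (dq u v ` {0<..})"
  have bdd: "bdd_below (dq u v ` {0<..})"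
    using dq_bounds(1) by (auto intro!: bdd_belowI[where m="- norm v"])
  fix a assume "a < ?L"
  then have "a < dq u v h" if "h > 0" for h
    using cInf_lower[OF _ bdd, of "dq u v h"] that by force
  then show "\<forall>\<^sub>F h in at_right 0. a < dq u v h"
    by (auto simp: eventually_at_right_field intro!: exI[of _ 1])
next
  let ?L = "Inf (dq u v ` {0<..})"
  fix a assume "?L < a"
  then obtain h0 where h0: "h0 > 0" "dq u v h0 < a"
    using cInf_lessD[of "dq u v ` {0<..}" a] by auto
  then have "dq u v h < a" if "0 < h" "h < h0" for h
    using dq_mono[of h h0 u v] that by simp
  then show "\<forall>\<^sub>F h in at_right 0. dq u v h < a"
    using h0 by (auto simp: eventually_at_right_field)
qed

lemma rsip_eq: "rsip u v = norm u * Inf (dq u v ` {0<..})"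
proof -
  have "Lim (at_right 0) (\<lambda>h::real. (norm (u + h *\<^sub>R v) - norm u) / h) = Inf (dq u v ` {0<..})"
    using tendsto_Lim[OF trivial_limit_at_right_real dq_tendsto[of u v]] unfolding dq_def
    by (simp add: tendsto_Lim)
  then show ?thesis unfolding rsip_def by simp
qed

lemma Inf_dq_le: "Inf (dq u v ` {0<..}) \<le> norm v"
proof -
  have "Inf (dq u v ` {0<..}) \<le> dq u v 1"
    by (rule cInf_lower) (use dq_bounds(1) in \<open>auto intro!: bdd_belowI[where m="- norm v"]\<close>)
  also have "\<dots> \<le> norm v" by (rule dq_bounds(2)) simp
  finally show ?thesis .
qed

lemma rsip_le: "rsip u v \<le> norm u * norm v"
  unfolding rsip_eq by (rule mult_left_mono[OF Inf_dq_le norm_ge_zero])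

lemma dq_add: "h > 0 \<Longrightarrow> dq u (a + b) h \<le> dq u a h + norm b"
proof -
  assume h: "h > 0"
  have "norm (u + h *\<^sub>R (a + b)) \<le> norm (u + h *\<^sub>R a) + norm (h *\<^sub>R b)"
    by (metis add.assoc norm_triangle_ineq scaleR_right_distrib)
  then have "norm (u + h *\<^sub>R (a + b)) - norm u \<le> (norm (u + h *\<^sub>R a) - norm u) + h * norm b"
    using h by simp
  then have "(norm (u + h *\<^sub>R (a + b)) - norm u) / h \<le> ((norm (u + h *\<^sub>R a) - norm u) + h * norm b) / h"
    using h by (intro divide_right_mono) simp_all
  also have "\<dots> = (norm (u + h *\<^sub>R a) - norm u) / h + norm b" using h by (simp add: field_simps)
  finally show ?thesis unfolding dq_def .
qed

lemma Inf_dq_add: "Inf (dq u (a + b) ` {0<..}) \<le> Inf (dq u a ` {0<..}) + norm b"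
proof -
  have "eventually (\<lambda>h. dq u (a + b) h \<le> dq u a h + norm b) (at_right (0::real))"
    using dq_add by (auto simp: eventually_at_right_field intro!: exI[of _ 1])
  then show ?thesis
    by (intro tendsto_le[OF trivial_limit_at_right_real _ dq_tendsto]) (auto intro!: tendsto_intros dq_tendsto)
qed

lemma rsip_add: "rsip u (a + b) \<le> rsip u a + norm u * norm b"
proof -
  have "norm u * Inf (dq u (a + b) ` {0<..}) \<le> norm u * (Inf (dq u a ` {0<..}) + norm b)"
    by (rule mult_left_mono[OF Inf_dq_add norm_ge_zero])
  then show ?thesis unfolding rsip_eq by (simp add: algebra_simps)
qed

lemma logM_le:
  fixes A :: "'a::real_normed_vector \<Rightarrow> 'a"
  assumes "bounded_linear A" "logM A \<le> lam" "w \<noteq> 0"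
  shows "rsip w (A w) \<le> lam * (norm w)\<^sup>2"
proof -
  obtain K where K: "\<And>x. norm (A x) \<le> norm x * K" "K > 0"
    using bounded_linear.pos_bounded[OF assms(1)] by blast
  have bdd: "bdd_above ((\<lambda>v. rsip v (A v) / (norm v)\<^sup>2) ` (- {0}))"
  proof (rule bdd_aboveI2[where M=K])
    fix v :: 'a
    assume "v \<in> - {0}"
    then have v: "norm v > 0" by simp
    have "rsip v (A v) \<le> norm v * (norm v * K)"
      using rsip_le[of v "A v"] mult_left_mono[OF K(1)[of v] norm_ge_zero[of v]] by linarith
    then show "rsip v (A v) / (norm v)\<^sup>2 \<le> K" using v by (simp add: divide_le_eq power2_eq_square algebra_simps)
  qed
  have "rsip w (A w) / (norm w)\<^sup>2 \<le> logM A"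
    unfolding logM_def by (rule cSUP_upper[OF _ bdd]) (use assms in simp)
  then have "rsip w (A w) / (norm w)\<^sup>2 \<le> lam" using assms by linarith
  then show ?thesis using assms(3) by (simp add: divide_le_eq)
qed



lemma vderiv_right_approx:
  fixes w :: "real \<Rightarrow> 'a::real_normed_vector"
  assumes der: "(w has_vector_derivative w') (at t within {t..b})" and tb: "t < b" and e: "e > 0"
  shows "\<forall>\<^sub>F h in at_right 0. norm (w (t+h) - w t - h *\<^sub>R w') \<le> e * h"
proof -
  have "(w has_derivative (\<lambda>x. x *\<^sub>R w')) (at t within {t..b})"
    using der by (simp add: has_vector_derivative_def)
  then obtain d where d: "d > 0" "\<And>y. y \<in> {t..b} \<Longrightarrow> norm (y - t) < d \<Longrightarrow>
      norm (w y - w t - (y - t) *\<^sub>R w') \<le> e * norm (y - t)"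
    unfolding has_derivative_within_alt using e by blast
  show ?thesis unfolding eventually_at_right_field
  proof (intro exI[of _ "min d (b - t)"] conjI allI impI)
    show "0 < min d (b - t)" using d(1) tb by simp
    fix h :: real assume "0 < h" "h < min d (b - t)"
    then show "norm (w (t + h) - w t - h *\<^sub>R w') \<le> e * h"
      using d(2)[of "t+h"] by simp
  qed
qed

lemma norm_dini:
  fixes w :: "real \<Rightarrow> 'a::real_normed_vector"
  assumes der: "(w has_vector_derivative w') (at t within {t..b})" and tb: "t < b"
    and bnd: "w t \<noteq> 0 \<Longrightarrow> rsip (w t) w' \<le> c * norm (w t)"
    and bnd0: "w t = 0 \<Longrightarrow> norm w' \<le> c"
    and e: "e > 0"
  shows "\<forall>\<^sub>F h in at_right 0. norm (w (t+h)) \<le> norm (w t) + h * (c + e)"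
proof -
  have e2: "e/2 > 0" using e by simp
  have A: "\<forall>\<^sub>F h in at_right 0. norm (w (t+h) - w t - h *\<^sub>R w') \<le> e/2 * h"
    by (rule vderiv_right_approx[OF der tb e2])
  have pos: "\<forall>\<^sub>F h in at_right (0::real). h > 0"
    by (simp add: eventually_at_right_less)
  have tri: "norm (w (t+h)) \<le> norm (w t + h *\<^sub>R w') + norm (w (t+h) - w t - h *\<^sub>R w')" for h
    using norm_triangle_ineq[of "w t + h *\<^sub>R w'" "w (t+h) - w t - h *\<^sub>R w'"] by simp
  show ?thesis
  proof (cases "w t = 0")
    case True
    have key: "norm (w (t+h)) \<le> norm (w t) + h * (c + e)"
      if "norm (w (t+h) - w t - h *\<^sub>R w') \<le> e/2 * h" "h > 0" for h
    proof -
      have "norm (w t + h *\<^sub>R w') = h * norm w'" using True that by simp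
      also have "\<dots> \<le> h * c" using bnd0[OF True] that by (simp add: mult_left_mono)
      finally have n1: "norm (w t + h *\<^sub>R w') \<le> h * c" .
      have "h * (c + e) = h * c + h * e" by (simp add: algebra_simps)
      moreover have "e/2 * h \<le> h * e" using that(2) e by simp
      ultimately show ?thesis using tri[of h] that(1) n1 True by (simp add: mult.commute)

    qed
    show ?thesis using eventually_conj[OF A pos] by (rule eventually_mono) (auto intro: key)
  next
    case False
    let ?L = "Inf (dq (w t) w' ` {0<..})"
    have "norm (w t) * ?L \<le> c * norm (w t)" using bnd[OF False] unfolding rsip_eq .
    then have Lc: "?L \<le> c" using False by (simp add: mult.commute)
    have "?L < ?L + e/2" using e by simp
    then have B: "\<forall>\<^sub>F h in at_right 0. dq (w t) w' h < ?L + e/2"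
      using order_tendstoD(2)[OF dq_tendsto] by blast
    have key: "norm (w (t+h)) \<le> norm (w t) + h * (c + e)"
      if "norm (w (t+h) - w t - h *\<^sub>R w') \<le> e/2 * h" "h > 0" "dq (w t) w' h < ?L + e/2" for h
    proof -
      have "norm (w t + h *\<^sub>R w') - norm (w t) < h * (?L + e/2)"
        using that(2,3) unfolding dq_def by (simp add: divide_less_eq mult.commute)
      also have "\<dots> \<le> h * (c + e/2)" using Lc that(2) by simp
      finally have n1: "norm (w t + h *\<^sub>R w') < norm (w t) + h * (c + e/2)" by simp
      have "h * (c + e) = h * (c + e/2) + e/2 * h" by (simp add: algebra_simps)
      then show ?thesis using tri[of h] that(1) n1 by simp
    qed
    show ?thesis using eventually_conj[OF A eventually_conj[OF pos B]] by (rule eventually_mono) (auto intro: key)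
  qed
qed



lemma dini_barrier:
  fixes \<psi> :: "real \<Rightarrow> real"
  assumes cont: "continuous_on {a..b} \<psi>" and ab: "a \<le> b" and psa: "\<psi> a \<ge> 0" and eta: "\<eta> > 0"
    and guard: "\<And>\<tau>. \<tau> \<in> {a..b} \<Longrightarrow> (\<psi> a + \<eta>) * exp ((\<mu> + \<eta>) * (\<tau> - a)) < R"
    and dini: "\<And>t e. t \<in> {a..<b} \<Longrightarrow> (\<forall>\<tau>\<in>{a..t}. \<psi> \<tau> < R) \<Longrightarrow> e > 0 \<Longrightarrow>
                 \<forall>\<^sub>F h in at_right 0. \<psi> (t + h) \<le> \<psi> t + h * (\<mu> * \<psi> t + e)"
  shows "\<forall>t\<in>{a..b}. \<psi> t \<le> (\<psi> a + \<eta>) * exp ((\<mu> + \<eta>) * (t - a))"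
proof (rule ccontr)
  define g where "g t = (\<psi> a + \<eta>) * exp ((\<mu> + \<eta>) * (t - a))" for t
  have gpos: "g t > 0" for t unfolding g_def using psa eta by simp
  have ga: "\<psi> a < g a" unfolding g_def using eta by simp
  have gR: "g \<tau> < R" if "\<tau> \<in> {a..b}" for \<tau> unfolding g_def using guard that .
  have gshift: "g \<tau> = g t * exp ((\<mu> + \<eta>) * (\<tau> - t))" for t \<tau>
  proof -
    have "exp ((\<mu> + \<eta>) * (\<tau> - a)) = exp ((\<mu> + \<eta>) * (t - a)) * exp ((\<mu> + \<eta>) * (\<tau> - t))"
      by (subst exp_add[symmetric]) (simp add: algebra_simps)
    then show ?thesis unfolding g_def by simp
  qed
  have contg: "continuous_on {a..b} (\<lambda>t. \<psi> t - g t)"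
    unfolding g_def by (intro continuous_intros cont)
  define V where "V = {t\<in>{a..b}. g t < \<psi> t}"
  assume "\<not> (\<forall>t\<in>{a..b}. \<psi> t \<le> (\<psi> a + \<eta>) * exp ((\<mu> + \<eta>) * (t - a)))"
  then have Vne: "V \<noteq> {}" unfolding V_def g_def by force
  have bddV: "bdd_below V" unfolding V_def by (auto intro: bdd_belowI[where m=a])
  define t1 where "t1 = Inf V"
  have t1a: "a \<le> t1" unfolding t1_def using Vne by (intro cInf_greatest) (auto simp: V_def)
  have t1b: "t1 \<le> b"
  proof -
    obtain v where "v \<in> V" using Vne by blast
    then have "t1 \<le> v" unfolding t1_def using bddV by (intro cInf_lower)
    then show ?thesis using \<open>v \<in> V\<close> unfolding V_def by auto
  qed
  have below: "\<psi> \<tau> \<le> g \<tau>" if "\<tau> \<in> {a..b}" "\<tau> < t1" for \<tau>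
  proof (rule ccontr)
    assume "\<not> \<psi> \<tau> \<le> g \<tau>"
    then have "\<tau> \<in> V" unfolding V_def using that by auto
    then have "t1 \<le> \<tau>" unfolding t1_def using bddV by (intro cInf_lower)
    then show False using that by simp
  qed
  have at1: "\<psi> t1 \<le> g t1"
  proof (rule ccontr)
    assume "\<not> \<psi> t1 \<le> g t1"
    then have pos: "\<psi> t1 - g t1 > 0" by simp
    have t1in: "t1 \<in> {a..b}" using t1a t1b by simp
    obtain d where d: "d > 0" "\<And>x. x \<in> {a..b} \<Longrightarrow> dist x t1 < d \<Longrightarrow>
        dist (\<psi> x - g x) (\<psi> t1 - g t1) < \<psi> t1 - g t1"
      using contg[unfolded continuous_on_iff, rule_format, OF t1in pos] by blast
    have "t1 \<noteq> a" using \<open>\<not> \<psi> t1 \<le> g t1\<close> ga by auto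
    then have t1a': "a < t1" using t1a by simp
    define x where "x = max a (t1 - d/2)"
    have x: "x \<in> {a..b}" "x < t1" "dist x t1 < d" unfolding x_def using t1a' t1b d(1)
      by (auto simp: dist_real_def)
    have "\<psi> x - g x > 0" using d(2)[OF x(1) x(3)] pos by (simp add: dist_real_def abs_less_iff)
    then show False using below[OF x(1) x(2)] by simp
  qed
  have t1V: "t1 \<notin> V" using at1 unfolding V_def by auto
  have gap: "\<exists>\<delta>>0. \<forall>\<tau>\<in>{a..b}. t1 < \<tau> \<and> \<tau> < t1 + \<delta> \<longrightarrow> \<psi> \<tau> \<le> g \<tau>"
  proof (cases "t1 = b")
    case True
    then show ?thesis by (intro exI[of _ 1]) auto
  next
    case False
    then have t1in: "t1 \<in> {a..<b}" using t1a t1b by simp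
    show ?thesis
    proof (cases "\<psi> t1 < g t1")
      case True
      then have pos: "g t1 - \<psi> t1 > 0" by simp
      obtain d where d: "d > 0" "\<And>x. x \<in> {a..b} \<Longrightarrow> dist x t1 < d \<Longrightarrow>
          dist (\<psi> x - g x) (\<psi> t1 - g t1) < g t1 - \<psi> t1"
        using contg[unfolded continuous_on_iff, rule_format, of t1 "g t1 - \<psi> t1"] t1in pos by auto
      show ?thesis
      proof (intro exI[of _ d] conjI ballI impI)
        fix \<tau> assume "\<tau> \<in> {a..b}" "t1 < \<tau> \<and> \<tau> < t1 + d"
        then have "dist \<tau> t1 < d" by (simp add: dist_real_def)
        then show "\<psi> \<tau> \<le> g \<tau>" using d(2)[OF \<open>\<tau> \<in> {a..b}\<close>] by (simp add: dist_real_def abs_less_iff)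
      qed (use d in auto)
    next
      case False
      then have eq: "\<psi> t1 = g t1" using at1 by simp
      have grd: "\<forall>\<tau>\<in>{a..t1}. \<psi> \<tau> < R"
      proof
        fix \<tau> assume "\<tau> \<in> {a..t1}"
        then have "\<psi> \<tau> \<le> g \<tau>" using below[of \<tau>] eq t1b by (cases "\<tau> < t1") auto
        moreover have "g \<tau> < R" using gR \<open>\<tau> \<in> {a..t1}\<close> t1b by auto
        ultimately show "\<psi> \<tau> < R" by simp
      qed
      define e where "e = \<eta> * g t1 / 2"
      have e: "e > 0" unfolding e_def using eta gpos by simp
      have "\<forall>\<^sub>F h in at_right 0. \<psi> (t1 + h) \<le> \<psi> t1 + h * (\<mu> * \<psi> t1 + e)"
        by (rule dini[OF t1in grd e])
      then obtain d where d: "d > 0" "\<And>h. 0 < h \<Longrightarrow> h < d \<Longrightarrow> \<psi> (t1 + h) \<le> \<psi> t1 + h * (\<mu> * \<psi> t1 + e)"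
        unfolding eventually_at_right_field by auto
      show ?thesis
      proof (intro exI[of _ d] conjI ballI impI)
        fix \<tau> assume "\<tau> \<in> {a..b}" "t1 < \<tau> \<and> \<tau> < t1 + d"
        define h where "h = \<tau> - t1"
        have h: "0 < h" "h < d" "\<tau> = t1 + h" unfolding h_def using \<open>t1 < \<tau> \<and> \<tau> < t1 + d\<close> by auto
        have "\<psi> \<tau> \<le> g t1 + h * (\<mu> * g t1 + e)" using d(2)[OF h(1,2)] h(3) eq by simp
        also have "\<dots> \<le> g t1 * (1 + (\<mu> + \<eta>) * h)"
          unfolding e_def using h(1) eta gpos[of t1] by (simp add: algebra_simps)
        also have "\<dots> \<le> g t1 * exp ((\<mu> + \<eta>) * h)"
          using gpos[of t1] by (intro mult_left_mono) auto
        also have "\<dots> = g \<tau>" using gshift[of \<tau> t1] h(3) by simp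
        finally show "\<psi> \<tau> \<le> g \<tau>" .
      qed (use d in auto)
    qed
  qed
  then obtain \<delta> where \<delta>: "\<delta> > 0" "\<And>\<tau>. \<tau> \<in> {a..b} \<Longrightarrow> t1 < \<tau> \<Longrightarrow> \<tau> < t1 + \<delta> \<Longrightarrow> \<psi> \<tau> \<le> g \<tau>"
    by blast
  have "t1 + \<delta> \<le> t1" unfolding t1_def
  proof (rule cInf_greatest[OF Vne])
    fix v assume "v \<in> V"
    then have v: "v \<in> {a..b}" "g v < \<psi> v" unfolding V_def by auto
    have "t1 \<le> v" using \<open>v \<in> V\<close> unfolding t1_def using bddV by (intro cInf_lower)
    moreover have "v \<noteq> t1" using t1V \<open>v \<in> V\<close> by auto
    ultimately have "t1 < v" by simp
    then show "Inf V + \<delta> \<le> v" using \<delta>(2)[OF v(1)] v(2) unfolding t1_def[symmetric] by force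
  qed
  then show False using \<delta>(1) by simp
qed

lemma dini_gronwall:
  fixes \<psi> :: "real \<Rightarrow> real"
  assumes cont: "continuous_on {a..b} \<psi>" and ab: "a \<le> b" and psa: "\<psi> a \<ge> 0"
    and guard: "\<psi> a * max 1 (exp (\<mu> * (b - a))) < R"
    and dini: "\<And>t e. t \<in> {a..<b} \<Longrightarrow> (\<forall>\<tau>\<in>{a..t}. \<psi> \<tau> < R) \<Longrightarrow> e > 0 \<Longrightarrow>
                 \<forall>\<^sub>F h in at_right 0. \<psi> (t + h) \<le> \<psi> t + h * (\<mu> * \<psi> t + e)"
  shows "\<forall>t\<in>{a..b}. \<psi> t \<le> exp (\<mu> * (t - a)) * \<psi> a"
proof
  fix t assume t: "t \<in> {a..b}"
  define E where "E = max 1 (exp (\<mu> * (b - a)))"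
  have Ebound: "exp (\<mu> * (\<tau> - a)) \<le> E" if "\<tau> \<in> {a..b}" for \<tau>
  proof (cases "\<mu> \<ge> 0")
    case True
    then have "\<mu> * (\<tau> - a) \<le> \<mu> * (b - a)" using that by (intro mult_left_mono) auto
    then show ?thesis unfolding E_def by (simp add: le_max_iff_disj)
  next
    case False
    then have "\<mu> * (\<tau> - a) \<le> 0" using that by (simp add: mult_nonpos_nonneg)
    then show ?thesis unfolding E_def by (simp add: le_max_iff_disj)
  qed
  have E0: "E > 0" unfolding E_def by simp
  have lim: "((\<lambda>\<eta>. (\<psi> a + \<eta>) * E * exp (\<eta> * (b - a))) \<longlongrightarrow> (\<psi> a + 0) * E * exp (0 * (b - a))) (at_right 0)"
    by (intro tendsto_intros)
  then have ev1: "\<forall>\<^sub>F \<eta> in at_right 0. (\<psi> a + \<eta>) * E * exp (\<eta> * (b - a)) < R"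
    using guard unfolding E_def by (intro order_tendstoD(2)) auto
  have ev2: "\<forall>\<^sub>F \<eta> in at_right (0::real). \<eta> > 0" by (simp add: eventually_at_right_less)
  have ev: "\<forall>\<^sub>F \<eta> in at_right 0. \<psi> t \<le> (\<psi> a + \<eta>) * exp ((\<mu> + \<eta>) * (t - a))"
    using eventually_conj[OF ev1 ev2]
  proof (rule eventually_mono)
    fix \<eta> :: real assume H: "(\<psi> a + \<eta>) * E * exp (\<eta> * (b - a)) < R \<and> 0 < \<eta>"
    have gd: "(\<psi> a + \<eta>) * exp ((\<mu> + \<eta>) * (\<tau> - a)) < R" if "\<tau> \<in> {a..b}" for \<tau>
    proof -
      have "exp ((\<mu> + \<eta>) * (\<tau> - a)) = exp (\<mu> * (\<tau> - a)) * exp (\<eta> * (\<tau> - a))"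
        by (subst exp_add[symmetric]) (simp add: algebra_simps)
      also have "\<dots> \<le> E * exp (\<eta> * (b - a))"
        using Ebound[OF that] that H E0 by (intro mult_mono) auto
      finally have "(\<psi> a + \<eta>) * exp ((\<mu> + \<eta>) * (\<tau> - a)) \<le> (\<psi> a + \<eta>) * (E * exp (\<eta> * (b - a)))"
        using psa H by (intro mult_left_mono) auto
      then show ?thesis using H by (simp add: mult.assoc)
    qed
    show "\<psi> t \<le> (\<psi> a + \<eta>) * exp ((\<mu> + \<eta>) * (t - a))"
      using dini_barrier[OF cont ab psa _ gd dini] H t by auto
  qed
  have "((\<lambda>\<eta>. (\<psi> a + \<eta>) * exp ((\<mu> + \<eta>) * (t - a))) \<longlongrightarrow> (\<psi> a + 0) * exp ((\<mu> + 0) * (t - a))) (at_right 0)"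
    by (intro tendsto_intros)
  then have "\<psi> t \<le> (\<psi> a + 0) * exp ((\<mu> + 0) * (t - a))"
    by (rule tendsto_le[OF trivial_limit_at_right_real _ tendsto_const ev])
  then show "\<psi> t \<le> exp (\<mu> * (t - a)) * \<psi> a" by (simp add: mult.commute)
qed



lemma unif_near_compact:
  fixes g :: "'a::metric_space \<Rightarrow> 'b::metric_space"
  assumes K: "compact K" "K \<subseteq> D" and g: "continuous_on D g" and e: "e > 0"
  shows "\<exists>d>0. \<forall>k\<in>K. \<forall>p\<in>D. dist p k < d \<longrightarrow> dist (g p) (g k) < e"
proof (rule ccontr)
  assume "\<not> ?thesis"
  then have "\<forall>n. \<exists>k\<in>K. \<exists>p\<in>D. dist p k < 1 / (Suc n) \<and> \<not> dist (g p) (g k) < e"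
    by (metis of_nat_0_less_iff zero_less_Suc zero_less_divide_1_iff)
  then obtain k p where kp: "\<And>n. k n \<in> K" "\<And>n. p n \<in> D" "\<And>n. dist (p n) (k n) < 1 / Suc n"
     "\<And>n. dist (g (p n)) (g (k n)) \<ge> e"
    by (metis not_less)
  have "seq_compact K" using K(1) compact_imp_seq_compact by blast
  then obtain l r where lr: "l \<in> K" "strict_mono r" "(k \<circ> r) \<longlonglongrightarrow> l"
    using kp(1) unfolding seq_compact_def by metis
  have d0: "(\<lambda>n. dist (p (r n)) (k (r n))) \<longlonglongrightarrow> 0"
  proof (rule Lim_null_comparison[where g="\<lambda>n. 1 / Suc (r n)"])
    show "\<forall>\<^sub>F n in sequentially. norm (dist (p (r n)) (k (r n))) \<le> 1 / Suc (r n)"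
      using kp(3) by (intro always_eventually allI) (simp add: less_imp_le)
    have "(\<lambda>n. 1 / real (Suc n)) \<longlonglongrightarrow> 0" by (rule LIMSEQ_inverse_real_of_nat[unfolded inverse_eq_divide])
    then show "(\<lambda>n. 1 / real (Suc (r n))) \<longlonglongrightarrow> 0"
      using LIMSEQ_subseq_LIMSEQ[OF _ lr(2)] by (auto simp: o_def)
  qed
  have kl: "(\<lambda>n. k (r n)) \<longlonglongrightarrow> l" using lr(3) by (simp add: o_def)
  have pl: "(\<lambda>n. p (r n)) \<longlonglongrightarrow> l"
  proof (rule tendsto_dist_iff[THEN iffD2], rule Lim_null_comparison[where g="\<lambda>n. dist (p (r n)) (k (r n)) + dist (k (r n)) l"])
    show "\<forall>\<^sub>F n in sequentially. norm (dist (p (r n)) l) \<le> dist (p (r n)) (k (r n)) + dist (k (r n)) l"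
      by (intro always_eventually allI) (simp add: dist_triangle)
    have "(\<lambda>n. dist (k (r n)) l) \<longlonglongrightarrow> 0" using kl by (rule tendsto_dist_iff[THEN iffD1])
    then show "(\<lambda>n. dist (p (r n)) (k (r n)) + dist (k (r n)) l) \<longlonglongrightarrow> 0"
      by (rule tendsto_add_zero[OF d0])
  qed
  have lD: "l \<in> D" using lr(1) K(2) by blast
  have g1: "(\<lambda>n. g (p (r n))) \<longlonglongrightarrow> g l"
    by (rule continuous_on_tendsto_compose[OF g pl lD]) (use kp(2) in \<open>auto intro!: always_eventually\<close>)
  have g2: "(\<lambda>n. g (k (r n))) \<longlonglongrightarrow> g l"
    by (rule continuous_on_tendsto_compose[OF g kl lD]) (use kp(1) K(2) in \<open>auto intro!: always_eventually\<close>)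
  have "(\<lambda>n. dist (g (p (r n))) (g (k (r n)))) \<longlonglongrightarrow> dist (g l) (g l)"
    by (intro tendsto_dist g1 g2)
  then have "(\<lambda>n. dist (g (p (r n))) (g (k (r n)))) \<longlonglongrightarrow> 0" by simp
  then have "\<forall>\<^sub>F n in sequentially. dist (g (p (r n))) (g (k (r n))) < e"
    using e by (rule order_tendstoD(2))
  then obtain N where "\<forall>n\<ge>N. dist (g (p (r n))) (g (k (r n))) < e" unfolding eventually_sequentially by blast
  then show False using kp(4)[of "r N"] by auto
qed



lemma onorm_partial_le:
  fixes L :: "('a::real_normed_vector \<times> 'b::real_normed_vector) \<Rightarrow>\<^sub>L 'c::real_normed_vector"
  shows "onorm (\<lambda>v. blinfun_apply L (0, v)) \<le> norm L"
proof (rule onorm_bound)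
  show "0 \<le> norm L" by simp
  fix v :: 'b
  have "norm (blinfun_apply L (0, v)) \<le> norm L * norm ((0::'a), v)" by (rule norm_blinfun)
  then show "norm (blinfun_apply L (0, v)) \<le> norm L * norm v" by (simp add: norm_Pair)
qed

locale ode =
  fixes f :: "real \<times> 'v::banach \<Rightarrow> 'v" and f' :: "real \<times> 'v \<Rightarrow> (real \<times> 'v) \<Rightarrow>\<^sub>L 'v"
  assumes f_deriv: "\<And>p. p \<in> {0..} \<times> UNIV \<Longrightarrow>
             (f has_derivative blinfun_apply (f' p)) (at p within {0..} \<times> UNIV)"
    and f'_cont: "continuous_on ({0..} \<times> UNIV) f'"
begin

definition sol :: "real \<Rightarrow> (real \<Rightarrow> 'v) \<Rightarrow> bool" where
  "sol T x \<longleftrightarrow> (\<forall>t\<in>{0..T}. (x has_vector_derivative f (t, x t)) (at t within {0..T}))"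

lemma f_cont: "continuous_on ({0..} \<times> UNIV) f"
  unfolding continuous_on_eq_continuous_within
  using f_deriv has_derivative_continuous by blast

lemma f_partial:
  assumes "t \<ge> 0"
  shows "((\<lambda>y. f (t, y)) has_derivative (\<lambda>v. blinfun_apply (f' (t, y)) (0, v))) (at y within S)"
proof -
  have 1: "((\<lambda>y. (t, y)) has_derivative (\<lambda>v. (0, v))) (at y within S)"
    by (intro derivative_eq_intros) auto
  have 2: "(f has_derivative blinfun_apply (f' (t, y))) (at (t, y) within (\<lambda>y. (t, y)) ` S)"
    by (rule has_derivative_subset[OF f_deriv]) (use assms in auto)
  show ?thesis using diff_chain_within[OF 1 2] by (simp add: o_def)
qed

lemma f_lip:
  assumes t: "t \<ge> 0" and S: "convex S" and B: "\<And>y. y \<in> S \<Longrightarrow> norm (f' (t, y)) \<le> B"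
    and y1: "y1 \<in> S" and y2: "y2 \<in> S"
  shows "norm (f (t, y1) - f (t, y2)) \<le> B * norm (y1 - y2)"
proof (rule differentiable_bound[OF S _ _ y1 y2])
  show "((\<lambda>y. f (t, y)) has_derivative (\<lambda>v. blinfun_apply (f' (t, y)) (0, v))) (at y within S)" for y
    by (rule f_partial[OF t])
  show "onorm (\<lambda>v. blinfun_apply (f' (t, y)) (0, v)) \<le> B" if "y \<in> S" for y
    using onorm_partial_le[of "f' (t, y)"] B[OF that] by linarith
qed

lemma f_lin:
  assumes t: "t \<ge> 0" and e: "\<And>s. s \<in> {0..1} \<Longrightarrow> norm (f' (t, x + s *\<^sub>R (y - x)) - f' (t, x)) \<le> e"
  shows "norm (f (t, y) - f (t, x) - blinfun_apply (f' (t, x)) (0, y - x)) \<le> norm (y - x) * e"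
proof -
  define S where "S = (\<lambda>s. x + s *\<^sub>R (y - x)) ` {0..1}"
  have xS: "x \<in> S" unfolding S_def by (rule image_eqI[where x=0]) auto
  show ?thesis
  proof (rule differentiable_bound_linearization[where S=S and f'="\<lambda>z v. blinfun_apply (f' (t, z)) (0, v)" and f="\<lambda>z. f (t, z)", OF _ _ _ xS])
    show "x + s *\<^sub>R (y - x) \<in> S" if "s \<in> {0..1}" for s unfolding S_def using that by blast
    show "((\<lambda>z. f (t, z)) has_derivative (\<lambda>v. blinfun_apply (f' (t, z)) (0, v))) (at z within S)" for z
      by (rule f_partial[OF t])
    show "onorm ((\<lambda>v. blinfun_apply (f' (t, z)) (0, v)) - (\<lambda>v. blinfun_apply (f' (t, x)) (0, v))) \<le> e"
      if "z \<in> S" for z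
    proof -
      obtain s where s: "s \<in> {0..1}" "z = x + s *\<^sub>R (y - x)" using \<open>z \<in> S\<close> unfolding S_def by blast
      have "((\<lambda>v. blinfun_apply (f' (t, z)) (0, v)) - (\<lambda>v. blinfun_apply (f' (t, x)) (0, v)))
          = (\<lambda>v. blinfun_apply (f' (t, z) - f' (t, x)) (0, v))"
        by (auto simp: fun_eq_iff blinfun.diff_left)
      then show ?thesis using onorm_partial_le[of "f' (t, z) - f' (t, x)"] e[OF s(1)] s(2) by simp
    qed
  qed
qed

lemma sol_cont: "sol T x \<Longrightarrow> continuous_on {0..T} x"
  unfolding sol_def continuous_on_eq_continuous_within
  using has_vector_derivative_continuous by blast

lemma sol_sub:
  assumes "sol T x" "T' \<le> T"
  shows "sol T' x"
  unfolding sol_def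
proof
  fix t assume t: "t \<in> {0..T'}"
  then have "(x has_vector_derivative f (t, x t)) (at t within {0..T})"
    using assms unfolding sol_def by auto
  then show "(x has_vector_derivative f (t, x t)) (at t within {0..T'})"
    by (rule has_vector_derivative_within_subset) (use assms in auto)
qed

lemma sol_rhs_cont: "sol T x \<Longrightarrow> continuous_on {0..T} (\<lambda>t. f (t, x t))"
proof -
  assume "sol T x"
  then have "continuous_on {0..T} (\<lambda>t. (t, x t))" by (intro continuous_intros sol_cont)
  then show ?thesis
    by (rule continuous_on_compose2[OF f_cont]) auto
qed

lemma tube_bound:
  assumes K: "compact K" "K \<subseteq> {0..} \<times> UNIV"
  shows "\<exists>\<rho>>0. \<exists>B\<ge>0. \<forall>t y z. (t, y) \<in> K \<longrightarrow> norm (z - y) < \<rho> \<longrightarrow> norm (f' (t, z)) \<le> B"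
proof -
  obtain d where d: "d > 0" "\<And>k p. k \<in> K \<Longrightarrow> p \<in> {0..} \<times> UNIV \<Longrightarrow> dist p k < d \<Longrightarrow> dist (f' p) (f' k) < 1"
    using unif_near_compact[OF K f'_cont, of 1] by auto
  have "compact (f' ` K)" using compact_continuous_image[OF continuous_on_subset[OF f'_cont K(2)] K(1)] .
  then have "bounded (f' ` K)" by (rule compact_imp_bounded)
  then obtain M where M0: "\<forall>x\<in>f' ` K. norm x \<le> M" unfolding bounded_iff by blast
  have M: "norm (f' k) \<le> M" if "k \<in> K" for k using M0 that by blast
  have key: "\<forall>t y z. (t, y) \<in> K \<longrightarrow> norm (z - y) < d \<longrightarrow> norm (f' (t, z)) \<le> max 0 M + 1"
  proof (intro allI impI)
    fix t y z assume ty: "(t, y) \<in> K" and z: "norm (z - y) < d"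
    have "t \<ge> 0" using ty K(2) by auto
    then have "dist (f' (t, z)) (f' (t, y)) < 1"
      using d(2)[OF ty _ ] z by (simp add: dist_Pair_Pair dist_norm)
    moreover have "norm (f' (t, z)) - norm (f' (t, y)) \<le> dist (f' (t, z)) (f' (t, y))"
      unfolding dist_norm by (rule norm_triangle_ineq2)
    ultimately have "norm (f' (t, z)) < norm (f' (t, y)) + 1" by linarith
    then show "norm (f' (t, z)) \<le> max 0 M + 1" using M[OF ty] by linarith
  qed
  show ?thesis
    apply (rule exI[of _ d])
    apply (rule conjI[OF d(1)])
    apply (rule exI[of _ "max 0 M + 1"])
    using key by simp
qed

lemma sol_graph_compact:
  assumes "sol T x" "T \<ge> 0"
  shows "compact ((\<lambda>t. (t, x t)) ` {0..T})" "(\<lambda>t. (t, x t)) ` {0..T} \<subseteq> {0..} \<times> UNIV"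
proof -
  show "compact ((\<lambda>t. (t, x t)) ` {0..T})"
    by (intro compact_continuous_image continuous_intros sol_cont[OF assms(1)]) auto
  show "(\<lambda>t. (t, x t)) ` {0..T} \<subseteq> {0..} \<times> UNIV" by auto
qed

end


context ode begin

lemma compare:
  assumes x: "sol T x" and y: "sol T y" and T: "T \<ge> 0" and B: "B \<ge> 0"
    and bnd: "\<And>t z. t \<in> {0..T} \<Longrightarrow> norm (z - x t) < \<rho> \<Longrightarrow> norm (f' (t, z)) \<le> B"
    and init: "norm (y 0 - x 0) * exp (B * T) < \<rho>"
  shows "\<forall>t\<in>{0..T}. norm (y t - x t) \<le> exp (B * t) * norm (y 0 - x 0)"
proof -
  define \<psi> where "\<psi> t = norm (y t - x t)" for t
  have cont: "continuous_on {0..T} \<psi>" unfolding \<psi>_def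
    by (intro continuous_intros sol_cont x y)
  have "\<forall>t\<in>{0..T}. \<psi> t \<le> exp (B * (t - 0)) * \<psi> 0"
  proof (rule dini_gronwall[where R=\<rho>, OF cont T])
    show "0 \<le> \<psi> 0" unfolding \<psi>_def by simp
    have "max 1 (exp (B * (T - 0))) = exp (B * T)" using B T by (simp add: max_def)
    then show "\<psi> 0 * max 1 (exp (B * (T - 0))) < \<rho>" using init unfolding \<psi>_def by simp
  next
    fix t e :: real
    assume t: "t \<in> {0..<T}" and grd: "\<forall>\<tau>\<in>{0..t}. \<psi> \<tau> < \<rho>" and e: "e > 0"
    have tT: "t \<in> {0..T}" using t by simp
    have "((\<lambda>s. y s - x s) has_vector_derivative (f (t, y t) - f (t, x t))) (at t within {0..T})"
      using x y tT unfolding sol_def by (intro has_vector_derivative_diff) auto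
    then have der: "((\<lambda>s. y s - x s) has_vector_derivative (f (t, y t) - f (t, x t))) (at t within {t..T})"
      by (rule has_vector_derivative_within_subset) (use t in auto)
    have pt: "\<psi> t < \<rho>" using grd t by simp
    have lip: "norm (f (t, y t) - f (t, x t)) \<le> B * \<psi> t"
      unfolding \<psi>_def
    proof (rule f_lip[where S="ball (x t) \<rho>"])
      show "0 \<le> t" using t by simp
      show "norm (f' (t, z)) \<le> B" if "z \<in> ball (x t) \<rho>" for z
        using bnd[OF tT, of z] that by (simp add: dist_norm norm_minus_commute)
      show "y t \<in> ball (x t) \<rho>" using pt unfolding \<psi>_def by (simp add: dist_norm norm_minus_commute)
      show "x t \<in> ball (x t) \<rho>" using pt \<psi>_def by simp (metis norm_ge_zero le_less_trans)
    qed simp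
    have "\<forall>\<^sub>F h in at_right 0. norm (y (t + h) - x (t + h)) \<le> norm (y t - x t) + h * (B * \<psi> t + e)"
    proof (rule norm_dini[where w="\<lambda>s. y s - x s", OF der _ _ _ e])
      show "t < T" using t by simp
      show "rsip (y t - x t) (f (t, y t) - f (t, x t)) \<le> B * \<psi> t * norm (y t - x t)"
      proof -
        have "rsip (y t - x t) (f (t, y t) - f (t, x t)) \<le> norm (y t - x t) * norm (f (t, y t) - f (t, x t))"
          by (rule rsip_le)
        also have "\<dots> \<le> norm (y t - x t) * (B * \<psi> t)" by (rule mult_left_mono[OF lip norm_ge_zero])
        finally show ?thesis by (simp add: mult.commute)
      qed
      show "norm (f (t, y t) - f (t, x t)) \<le> B * \<psi> t" if "y t - x t = 0" by (rule lip)
    qed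
    then show "\<forall>\<^sub>F h in at_right 0. \<psi> (t + h) \<le> \<psi> t + h * (B * \<psi> t + e)"
      unfolding \<psi>_def .
  qed
  then show ?thesis unfolding \<psi>_def by simp
qed

lemma sol_unique:
  assumes x: "sol T x" and y: "sol T y" and eq: "y 0 = x 0" and t: "t \<in> {0..T}"
  shows "y t = x t"
proof -
  have T: "T \<ge> 0" using t by simp
  obtain \<rho> B where \<rho>: "\<rho> > 0" "B \<ge> 0"
    and bnd: "\<And>t y z. (t, y) \<in> (\<lambda>t. (t, x t)) ` {0..T} \<Longrightarrow> norm (z - y) < \<rho> \<Longrightarrow> norm (f' (t, z)) \<le> B"
    using tube_bound[OF sol_graph_compact[OF x T]] by blast
  have "\<forall>t\<in>{0..T}. norm (y t - x t) \<le> exp (B * t) * norm (y 0 - x 0)"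
  proof (rule compare[OF x y T \<rho>(2), where \<rho>=\<rho>])
    show "norm (f' (s, z)) \<le> B" if "s \<in> {0..T}" "norm (z - x s) < \<rho>" for s z
      using bnd[of s "x s" z] that by auto
    show "norm (y 0 - x 0) * exp (B * T) < \<rho>" using eq \<rho> by simp
  qed
  then show ?thesis using t eq by auto
qed

end


lemma exp_partial_le:
  fixes u :: real
  assumes "0 \<le> u"
  shows "(\<Sum>k<n. u ^ k / fact k) \<le> exp u"
proof -
  have s: "(\<lambda>k. u ^ k / fact k) sums exp u"
    using exp_converges[of u] by (simp add: divide_inverse mult.commute)
  have "(\<Sum>k<n. u ^ k / fact k) \<le> suminf (\<lambda>k. u ^ k / fact k)"
    by (rule sum_le_suminf) (use s assms in \<open>auto simp: sums_iff\<close>)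
  then show ?thesis using s by (simp add: sums_iff)
qed

lemma int_pow:
  fixes t c :: real and n :: nat
  assumes "0 \<le> t"
  shows "((\<lambda>\<tau>. c * \<tau> ^ n) has_integral (c * t ^ Suc n / Suc n)) {0..t}"
proof -
  have "((\<lambda>\<tau>. c * \<tau> ^ n) has_integral ((\<lambda>\<tau>. c * \<tau> ^ Suc n / Suc n) t - (\<lambda>\<tau>. c * \<tau> ^ Suc n / Suc n) 0)) {0..t}"
  proof (rule fundamental_theorem_of_calculus[OF assms])
    fix x :: real
    have "((\<lambda>\<tau>. c * \<tau> ^ Suc n / Suc n) has_real_derivative c * (real (Suc n) * x ^ n) / Suc n) (at x within {0..t})"
      by (intro derivative_eq_intros) auto
    then show "((\<lambda>\<tau>. c * \<tau> ^ Suc n / Suc n) has_vector_derivative c * x ^ n) (at x within {0..t})"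
      by (simp add: has_real_derivative_iff_has_vector_derivative[symmetric] del: of_nat_Suc)
  qed
  then show ?thesis by simp
qed

context ode begin

lemma ftc_sol:
  assumes x: "sol T x" and t: "t \<in> {0..T}"
  shows "x t = x 0 + integral {0..t} (\<lambda>\<tau>. f (\<tau>, x \<tau>))"
proof -
  have "((\<lambda>\<tau>. f (\<tau>, x \<tau>)) has_integral (x t - x 0)) {0..t}"
  proof (rule fundamental_theorem_of_calculus)
    show "0 \<le> t" using t by simp
    fix s assume s: "s \<in> {0..t}"
    have "(x has_vector_derivative f (s, x s)) (at s within {0..T})" using x s t unfolding sol_def by auto
    then show "(x has_vector_derivative f (s, x s)) (at s within {0..t})"
      by (rule has_vector_derivative_within_subset) (use t in auto)
  qed
  then show ?thesis by (simp add: integral_unique)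
qed

lemma comp_cont:
  assumes "continuous_on {0..T} z"
  shows "continuous_on {0..T} (\<lambda>\<tau>. f (\<tau>, z \<tau>))"
proof -
  have "continuous_on {0..T} (\<lambda>t. (t, z t))" by (intro continuous_intros assms)
  then show ?thesis by (rule continuous_on_compose2[OF f_cont]) auto
qed

lemma cont_integrable:
  fixes g :: "real \<Rightarrow> 'a::banach"
  assumes "continuous_on {0..T} g" "t \<in> {0..T}"
  shows "g integrable_on {0..t}"
  by (rule integrable_continuous_real) (rule continuous_on_subset[OF assms(1)], use assms(2) in auto)

lemma P_cont:
  assumes "continuous_on {0..T} z"
  shows "continuous_on {0..T} (\<lambda>t. a + integral {0..t} (\<lambda>\<tau>. f (\<tau>, z \<tau>)))"
proof -
  have "(\<lambda>\<tau>. f (\<tau>, z \<tau>)) integrable_on {0..T}"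
    by (rule integrable_continuous_real[OF comp_cont[OF assms]])
  then have "continuous_on {0..T} (\<lambda>t. integral {0..t} (\<lambda>\<tau>. f (\<tau>, z \<tau>)))"
    by (rule indefinite_integral_continuous_1)
  then show ?thesis by (intro continuous_intros)
qed

lemma int_diff_bound:
  assumes z1: "continuous_on {0..T} z1" and z2: "continuous_on {0..T} z2" and t: "t \<in> {0..T}"
    and gi: "(g has_integral I) {0..t}"
    and b: "\<And>\<tau>. \<tau> \<in> {0..t} \<Longrightarrow> norm (f (\<tau>, z1 \<tau>) - f (\<tau>, z2 \<tau>)) \<le> g \<tau>"
  shows "norm (integral {0..t} (\<lambda>\<tau>. f (\<tau>, z1 \<tau>)) - integral {0..t} (\<lambda>\<tau>. f (\<tau>, z2 \<tau>))) \<le> I"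
proof -
  have i1: "(\<lambda>\<tau>. f (\<tau>, z1 \<tau>)) integrable_on {0..t}" by (rule cont_integrable[OF comp_cont[OF z1] t])
  have i2: "(\<lambda>\<tau>. f (\<tau>, z2 \<tau>)) integrable_on {0..t}" by (rule cont_integrable[OF comp_cont[OF z2] t])
  have "integral {0..t} (\<lambda>\<tau>. f (\<tau>, z1 \<tau>)) - integral {0..t} (\<lambda>\<tau>. f (\<tau>, z2 \<tau>))
        = integral {0..t} (\<lambda>\<tau>. f (\<tau>, z1 \<tau>) - f (\<tau>, z2 \<tau>))"
    by (rule integral_diff[OF i1 i2, symmetric])
  also have "norm \<dots> \<le> integral {0..t} g"
    by (rule integral_norm_bound_integral) (use i1 i2 gi b in \<open>auto intro: integrable_diff\<close>)
  also have "\<dots> = I" using gi by (rule integral_unique)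
  finally show ?thesis .
qed

end


context ode begin

lemma exist:
  assumes x: "sol T x" and T: "T \<ge> 0" and B: "B \<ge> 0"
    and bnd: "\<And>t z. t \<in> {0..T} \<Longrightarrow> norm (z - x t) < \<rho> \<Longrightarrow> norm (f' (t, z)) \<le> B"
    and init: "norm (a - x 0) * exp (B * T) < \<rho>"
  shows "\<exists>y. sol T y \<and> y 0 = a"
proof -
  define \<delta>0 where "\<delta>0 = norm (a - x 0)"
  have \<delta>0: "\<delta>0 \<ge> 0" unfolding \<delta>0_def by simp
  have \<delta>\<rho>: "\<delta>0 * exp (B * T) < \<rho>" using init unfolding \<delta>0_def .
  define P where "P z = (\<lambda>t. a + integral {0..t} (\<lambda>\<tau>. f (\<tau>, z \<tau>)))" for z :: "real \<Rightarrow> 'v"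
  define z where "z n = (P ^^ n) x" for n
  have z0: "z 0 = x" and zS: "z (Suc n) = P (z n)" for n unfolding z_def by simp_all
  have zc: "continuous_on {0..T} (z n)" for n
  proof (induction n)
    case 0 then show ?case using sol_cont[OF x] z0 by simp
  next
    case (Suc n) then show ?case unfolding zS P_def by (rule P_cont)
  qed
  have lipT: "norm (f (t, u) - f (t, v)) \<le> B * norm (u - v)"
    if "t \<in> {0..T}" "norm (u - x t) < \<rho>" "norm (v - x t) < \<rho>" for t u v
  proof (rule f_lip[where S="ball (x t) \<rho>"])
    show "0 \<le> t" using that by simp
    show "norm (f' (t, w)) \<le> B" if "w \<in> ball (x t) \<rho>" for w
      using bnd[OF \<open>t \<in> {0..T}\<close>, of w] that by (simp add: dist_norm norm_minus_commute)
    show "u \<in> ball (x t) \<rho>" using that by (simp add: dist_norm norm_minus_commute)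
    show "v \<in> ball (x t) \<rho>" using that by (simp add: dist_norm norm_minus_commute)
  qed simp
  define Dn where "Dn n \<longleftrightarrow> (\<forall>t\<in>{0..T}. norm (z (Suc n) t - z n t) \<le> \<delta>0 * (B * t) ^ n / fact n)" for n
  have tube: "norm (z n t - x t) \<le> \<delta>0 * exp (B * T)" if "\<forall>k<n. Dn k" "t \<in> {0..T}" for n t
  proof -
    have "z n t - x t = (\<Sum>k<n. z (Suc k) t - z k t)"
      using sum_lessThan_telescope[of "\<lambda>k. z k t" n] z0 by simp
    then have "norm (z n t - x t) \<le> (\<Sum>k<n. norm (z (Suc k) t - z k t))"
      by (simp add: norm_sum)
    also have "\<dots> \<le> (\<Sum>k<n. \<delta>0 * ((B * t) ^ k / fact k))"
      using that unfolding Dn_def by (intro sum_mono) auto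
    also have "\<dots> = \<delta>0 * (\<Sum>k<n. (B * t) ^ k / fact k)" by (simp add: sum_distrib_left)
    also have "\<dots> \<le> \<delta>0 * exp (B * t)"
      using B that(2) \<delta>0 by (intro mult_left_mono exp_partial_le) auto
    also have "\<dots> \<le> \<delta>0 * exp (B * T)"
      using B that(2) \<delta>0 by (intro mult_left_mono) (auto intro: mult_left_mono)
    finally show ?thesis .
  qed
  have D: "Dn n" for n
  proof (induction n rule: less_induct)
    case (less n)
    show ?case
    proof (cases n)
      case 0
      show ?thesis unfolding Dn_def 0
      proof
        fix t assume t: "t \<in> {0..T}"
        have e: "z (Suc 0) t = a + (x t - x 0)"
          using ftc_sol[OF x t] unfolding zS z0 P_def by simp
        have "z (Suc 0) t - z 0 t = a - x 0" by (simp only: e z0) (simp add: algebra_simps)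
        then show "norm (z (Suc 0) t - z 0 t) \<le> \<delta>0 * (B * t) ^ 0 / fact 0"
          unfolding \<delta>0_def by simp
      qed
    next
      case (Suc m)
      have Dm: "Dn m" using less Suc by simp
      have tm: "norm (z m t - x t) < \<rho>" if "t \<in> {0..T}" for t
        using tube[of m t] less Suc that \<delta>\<rho> by force
      have tm1: "norm (z (Suc m) t - x t) < \<rho>" if "t \<in> {0..T}" for t
        using tube[of "Suc m" t] less Suc that \<delta>\<rho> by force
      show ?thesis unfolding Dn_def Suc
      proof
        fix t assume t: "t \<in> {0..T}"
        define c where "c = B * \<delta>0 * B ^ m / fact m"
        have "z (Suc (Suc m)) t - z (Suc m) t
            = integral {0..t} (\<lambda>\<tau>. f (\<tau>, z (Suc m) \<tau>)) - integral {0..t} (\<lambda>\<tau>. f (\<tau>, z m \<tau>))"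
          by (simp add: zS[of "Suc m"] zS[of m] P_def)
        also have "norm \<dots> \<le> c * t ^ Suc m / Suc m"
        proof (rule int_diff_bound[OF zc zc t])
          show "((\<lambda>\<tau>. c * \<tau> ^ m) has_integral c * t ^ Suc m / Suc m) {0..t}"
            by (rule int_pow) (use t in simp)
          fix \<tau> assume \<tau>: "\<tau> \<in> {0..t}"
          then have \<tau>T: "\<tau> \<in> {0..T}" using t by simp
          have "norm (f (\<tau>, z (Suc m) \<tau>) - f (\<tau>, z m \<tau>)) \<le> B * norm (z (Suc m) \<tau> - z m \<tau>)"
            by (rule lipT[OF \<tau>T tm1[OF \<tau>T] tm[OF \<tau>T]])
          also have "\<dots> \<le> B * (\<delta>0 * (B * \<tau>) ^ m / fact m)"
            using Dm \<tau>T B unfolding Dn_def by (intro mult_left_mono) auto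
          also have "\<dots> = c * \<tau> ^ m" unfolding c_def by (simp add: power_mult_distrib)
          finally show "norm (f (\<tau>, z (Suc m) \<tau>) - f (\<tau>, z m \<tau>)) \<le> c * \<tau> ^ m" .
        qed
        also have "\<dots> = \<delta>0 * (B * t) ^ Suc m / fact (Suc m)"
          unfolding c_def by (simp add: power_mult_distrib field_simps del: of_nat_Suc)
        finally show "norm (z (Suc (Suc m)) t - z (Suc m) t) \<le> \<delta>0 * (B * t) ^ Suc m / fact (Suc m)" .
      qed
    qed
  qed
  have ztube: "norm (z n t - x t) \<le> \<delta>0 * exp (B * T)" if "t \<in> {0..T}" for n t
    using tube[of n t] D that by blast
  have ztube': "norm (z n t - x t) < \<rho>" if "t \<in> {0..T}" for n t
    using ztube[OF that, of n] \<delta>\<rho> by linarith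
  define d where "d k t = z (Suc k) t - z k t" for k t
  define M where "M k = \<delta>0 * ((B * T) ^ k / fact k)" for k
  have dM: "norm (d k t) \<le> M k" if "t \<in> {0..T}" for k t
  proof -
    have "norm (d k t) \<le> \<delta>0 * (B * t) ^ k / fact k" using D[of k] that unfolding Dn_def d_def by auto
    also have "\<dots> \<le> \<delta>0 * ((B * T) ^ k / fact k)"
      using that B \<delta>0 by (auto intro!: mult_left_mono divide_right_mono power_mono mult_left_mono)
    finally show ?thesis unfolding M_def .
  qed
  have sM: "summable M"
  proof -
    have "summable (\<lambda>k. inverse (fact k) * (B * T) ^ k)" by (rule summable_exp)
    then have "summable (\<lambda>k. \<delta>0 * (inverse (fact k) * (B * T) ^ k))" by (rule summable_mult)
    then show ?thesis unfolding M_def by (simp add: divide_inverse mult.commute)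
  qed
  have ul: "uniform_limit {0..T} (\<lambda>n t. \<Sum>i<n. d i t) (\<lambda>t. \<Sum>i. d i t) sequentially"
    by (rule Weierstrass_m_test[OF dM sM])
  define y where "y t = x t + (\<Sum>i. d i t)" for t
  have zsum: "z n t = x t + (\<Sum>i<n. d i t)" for n t
    using sum_lessThan_telescope[of "\<lambda>k. z k t" n] z0 unfolding d_def by simp
  have uz: "uniform_limit {0..T} z y sequentially"
    unfolding uniform_limit_iff
  proof (intro allI impI)
    fix e :: real assume "e > 0"
    then have "\<forall>\<^sub>F n in sequentially. \<forall>t\<in>{0..T}. dist (\<Sum>i<n. d i t) (\<Sum>i. d i t) < e"
      using ul by (rule uniform_limitD[rotated])
    then show "\<forall>\<^sub>F n in sequentially. \<forall>t\<in>{0..T}. dist (z n t) (y t) < e"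
      by (rule eventually_mono) (simp add: zsum y_def dist_norm)
  qed
  have yc: "continuous_on {0..T} y"
    by (rule uniform_limit_theorem[OF always_eventually uz]) (use zc in auto)
  have zlim: "(\<lambda>n. z n t) \<longlonglongrightarrow> y t" if "t \<in> {0..T}" for t
    by (rule tendsto_uniform_limitI[OF uz that])
  have ytube: "norm (y t - x t) < \<rho>" if t: "t \<in> {0..T}" for t
  proof -
    have "(\<lambda>n. norm (z n t - x t)) \<longlonglongrightarrow> norm (y t - x t)"
      by (intro tendsto_intros zlim t)
    then have "norm (y t - x t) \<le> \<delta>0 * exp (B * T)"
      by (rule LIMSEQ_le_const2) (use ztube[OF t] in auto)
    then show ?thesis using \<delta>\<rho> by linarith
  qed
  have yeq: "y t = a + integral {0..t} (\<lambda>\<tau>. f (\<tau>, y \<tau>))" if t: "t \<in> {0..T}" for t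
  proof -
    have lim1: "(\<lambda>n. z (Suc n) t) \<longlonglongrightarrow> y t" using zlim[OF t] by (rule LIMSEQ_Suc)
    have lim2: "(\<lambda>n. integral {0..t} (\<lambda>\<tau>. f (\<tau>, z n \<tau>))) \<longlonglongrightarrow> integral {0..t} (\<lambda>\<tau>. f (\<tau>, y \<tau>))"
      unfolding LIMSEQ_iff
    proof (intro allI impI)
      fix r :: real assume r: "r > 0"
      define e where "e = r / (B * T + 1)"
      have BT: "B * T \<ge> 0" using B T by simp
      have e: "e > 0" unfolding e_def using r BT by simp
      obtain N where N: "\<And>n \<tau>. n \<ge> N \<Longrightarrow> \<tau> \<in> {0..T} \<Longrightarrow> dist (z n \<tau>) (y \<tau>) < e"
        using uz[unfolded uniform_limit_sequentially_iff, rule_format, OF e] by blast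
      show "\<exists>no. \<forall>n\<ge>no. norm (integral {0..t} (\<lambda>\<tau>. f (\<tau>, z n \<tau>)) - integral {0..t} (\<lambda>\<tau>. f (\<tau>, y \<tau>))) < r"
      proof (intro exI[of _ N] allI impI)
        fix n assume n: "n \<ge> N"
        have "norm (integral {0..t} (\<lambda>\<tau>. f (\<tau>, z n \<tau>)) - integral {0..t} (\<lambda>\<tau>. f (\<tau>, y \<tau>))) \<le> t *\<^sub>R (B * e)"
        proof (rule int_diff_bound[OF zc yc t])
          show "((\<lambda>\<tau>. B * e) has_integral t *\<^sub>R (B * e)) {0..t}"
            using has_integral_const_real[of "B * e" 0 t] t by simp
          fix \<tau> assume \<tau>: "\<tau> \<in> {0..t}"
          then have \<tau>T: "\<tau> \<in> {0..T}" using t by simp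
          have "norm (f (\<tau>, z n \<tau>) - f (\<tau>, y \<tau>)) \<le> B * norm (z n \<tau> - y \<tau>)"
            by (rule lipT[OF \<tau>T ztube'[OF \<tau>T] ytube[OF \<tau>T]])
          also have "\<dots> \<le> B * e" using N[OF n \<tau>T] B by (intro mult_left_mono) (auto simp: dist_norm)
          finally show "norm (f (\<tau>, z n \<tau>) - f (\<tau>, y \<tau>)) \<le> B * e" .
        qed
        also have "\<dots> = t * (B * e)" by simp
        also have "\<dots> \<le> T * (B * e)" using t B e by (intro mult_right_mono) auto
        also have "\<dots> < r"
        proof -
          have "T * (B * e) = r * (B * T) / (B * T + 1)" unfolding e_def by (simp add: field_simps)
          also have "\<dots> < r" using r BT by (simp add: divide_less_eq)
          finally show ?thesis .
        qed
        finally show "norm (integral {0..t} (\<lambda>\<tau>. f (\<tau>, z n \<tau>)) - integral {0..t} (\<lambda>\<tau>. f (\<tau>, y \<tau>))) < r" .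
      qed
    qed
    have "(\<lambda>n. z (Suc n) t) \<longlonglongrightarrow> a + integral {0..t} (\<lambda>\<tau>. f (\<tau>, y \<tau>))"
      unfolding zS P_def by (intro tendsto_intros lim2)
    then show ?thesis using lim1 LIMSEQ_unique by blast
  qed
  have "sol T y"
    unfolding sol_def
  proof
    fix t assume t: "t \<in> {0..T}"
    have gc: "continuous_on {0..T} (\<lambda>\<tau>. f (\<tau>, y \<tau>))" by (rule comp_cont[OF yc])
    have "((\<lambda>u. integral {0..u} (\<lambda>\<tau>. f (\<tau>, y \<tau>))) has_vector_derivative f (t, y t)) (at t within {0..T})"
      by (rule integral_has_vector_derivative[OF gc t])
    then have "((\<lambda>u. a + integral {0..u} (\<lambda>\<tau>. f (\<tau>, y \<tau>))) has_vector_derivative f (t, y t)) (at t within {0..T})"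
      by (intro derivative_eq_intros) auto
    then show "(y has_vector_derivative f (t, y t)) (at t within {0..T})"
      by (rule has_vector_derivative_transform[OF t yeq, rotated])
  qed
  moreover have "y 0 = a" using yeq[of 0] T by simp
  ultimately show ?thesis by blast
qed

end


locale ctr = ode f f' for f :: "real \<times> 'v::banach \<Rightarrow> 'v" and f' +
  fixes \<Theta> :: "real \<times> 'v \<Rightarrow> ('v \<Rightarrow>\<^sub>L 'w::banach)"
    and \<Theta>' :: "real \<times> 'v \<Rightarrow> (real \<times> 'v) \<Rightarrow>\<^sub>L ('v \<Rightarrow>\<^sub>L 'w)"
    and C lam :: real
  assumes \<Theta>_deriv: "\<And>p. p \<in> {0..} \<times> UNIV \<Longrightarrow>
             (\<Theta> has_derivative blinfun_apply (\<Theta>' p)) (at p within {0..} \<times> UNIV)"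
    and \<Theta>_bij: "\<And>t u. t \<ge> 0 \<Longrightarrow> bij (blinfun_apply (\<Theta> (t,u)))"
    and \<Theta>b: "\<And>t u v. t \<ge> 0 \<Longrightarrow> norm (blinfun_apply (\<Theta> (t,u)) v) \<le> C * norm v"
    and \<Theta>inv: "\<And>t u v. t \<ge> 0 \<Longrightarrow> norm v \<le> C * norm (blinfun_apply (\<Theta> (t,u)) v)"
    and Mb: "\<And>t u w. t \<ge> 0 \<Longrightarrow> w \<noteq> 0 \<Longrightarrow>
       rsip w (Gop f \<Theta> \<Theta>' f' t u (inv (blinfun_apply (\<Theta> (t,u))) w)) \<le> lam * (norm w)\<^sup>2"
    and C0: "C \<ge> 0"
begin

lemma two_point:
  assumes x: "sol T x" and y: "sol T y" and T: "T \<ge> 0" and \<epsilon>: "\<epsilon> \<ge> 0"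
    and lin: "\<And>t s. t \<in> {0..T} \<Longrightarrow> s \<in> {0..1} \<Longrightarrow> norm (f' (t, x t + s *\<^sub>R (y t - x t)) - f' (t, x t)) \<le> \<epsilon>"
  shows "\<forall>t\<in>{0..T}. norm (blinfun_apply (\<Theta> (t, x t)) (y t - x t))
           \<le> exp ((lam + C * C * \<epsilon>) * t) * norm (blinfun_apply (\<Theta> (0, x 0)) (y 0 - x 0))"
proof -
  define \<mu> where "\<mu> = lam + C * C * \<epsilon>"
  define w where "w t = blinfun_apply (\<Theta> (t, x t)) (y t - x t)" for t
  define w' where "w' t = blinfun_apply (\<Theta> (t, x t)) (f (t, y t) - f (t, x t))
      + blinfun_apply (blinfun_apply (\<Theta>' (t, x t)) (1, f (t, x t))) (y t - x t)" for t
  have wd: "(w has_vector_derivative w' t) (at t within {0..T})" if t: "t \<in> {0..T}" for t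
  proof -
    have xd: "(x has_vector_derivative f (t, x t)) (at t within {0..T})"
      and yd: "(y has_vector_derivative f (t, y t)) (at t within {0..T})"
      using x y t unfolding sol_def by auto
    have pd: "((\<lambda>t. (t, x t)) has_vector_derivative (1, f (t, x t))) (at t within {0..T})"
      by (intro derivative_intros xd)
    have \<Theta>d: "(\<Theta> has_derivative blinfun_apply (\<Theta>' (t, x t))) (at (t, x t) within (\<lambda>t. (t, x t)) ` {0..T})"
      by (rule has_derivative_subset[OF \<Theta>_deriv]) (use t in auto)
    have thd: "((\<lambda>t. \<Theta> (t, x t)) has_vector_derivative blinfun_apply (\<Theta>' (t, x t)) (1, f (t, x t))) (at t within {0..T})"
      using vector_derivative_diff_chain_within[OF pd \<Theta>d] by (simp add: o_def)
    have ed: "((\<lambda>t. y t - x t) has_vector_derivative (f (t, y t) - f (t, x t))) (at t within {0..T})"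
      by (intro derivative_intros xd yd)
    show ?thesis unfolding w_def w'_def using blinfun.has_vector_derivative[OF thd ed] .
  qed
  have wc: "continuous_on {0..T} w"
    unfolding continuous_on_eq_continuous_within using wd has_vector_derivative_continuous by blast
  define \<psi> where "\<psi> t = norm (w t)" for t
  have \<psi>c: "continuous_on {0..T} \<psi>" unfolding \<psi>_def by (intro continuous_intros wc)
  have "\<forall>t\<in>{0..T}. \<psi> t \<le> exp (\<mu> * (t - 0)) * \<psi> 0"
  proof (rule dini_gronwall[OF \<psi>c T, where R="\<psi> 0 * max 1 (exp (\<mu> * (T - 0))) + 1"])
    show "0 \<le> \<psi> 0" unfolding \<psi>_def by simp
    show "\<psi> 0 * max 1 (exp (\<mu> * (T - 0))) < \<psi> 0 * max 1 (exp (\<mu> * (T - 0))) + 1" by simp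
  next
    fix t e :: real
    assume t: "t \<in> {0..<T}" and e: "e > 0"
    have tT: "t \<in> {0..T}" and t0: "t \<ge> 0" using t by auto
    have der: "(w has_vector_derivative w' t) (at t within {t..T})"
      by (rule has_vector_derivative_within_subset[OF wd[OF tT]]) (use t in auto)
    define et where "et = y t - x t"
    define R where "R = f (t, y t) - f (t, x t) - blinfun_apply (f' (t, x t)) (0, et)"
    have Rb: "norm R \<le> norm et * \<epsilon>"
      unfolding R_def et_def by (rule f_lin[OF t0]) (use lin tT in auto)
    have inv_th: "inv (blinfun_apply (\<Theta> (t, x t))) (w t) = et"
      unfolding w_def et_def using \<Theta>_bij[OF t0] by (simp add: bij_is_inj)
    have w'eq: "w' t = Gop f \<Theta> \<Theta>' f' t (x t) (inv (blinfun_apply (\<Theta> (t, x t))) (w t))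
                      + blinfun_apply (\<Theta> (t, x t)) R"
    proof -
      have 1: "f (t, y t) - f (t, x t) = blinfun_apply (f' (t, x t)) (0, et) + R" unfolding R_def by simp
      have 2: "(1::real, f (t, x t)) = (1, 0) + (0, f (t, x t))" by simp
      have 3: "blinfun_apply (\<Theta>' (t, x t)) (1, f (t, x t))
          = blinfun_apply (\<Theta>' (t, x t)) (1, 0) + blinfun_apply (\<Theta>' (t, x t)) (0, f (t, x t))"
        using blinfun.add_right[of "\<Theta>' (t, x t)" "(1, 0)" "(0, f (t, x t))"] by simp
      show ?thesis unfolding w'_def inv_th Gop_def 1 et_def[symmetric] 3
        by (simp add: blinfun.add_right blinfun.add_left algebra_simps)
    qed
    have etb: "norm et \<le> C * \<psi> t" unfolding \<psi>_def w_def et_def by (rule \<Theta>inv[OF t0])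
    have "\<forall>\<^sub>F h in at_right 0. norm (w (t + h)) \<le> norm (w t) + h * (\<mu> * \<psi> t + e)"
    proof (rule norm_dini[OF der _ _ _ e])
      show "t < T" using t by simp
      show "rsip (w t) (w' t) \<le> \<mu> * \<psi> t * norm (w t)" if wt: "w t \<noteq> 0"
      proof -
        have "rsip (w t) (w' t) \<le> rsip (w t) (Gop f \<Theta> \<Theta>' f' t (x t) (inv (blinfun_apply (\<Theta> (t, x t))) (w t)))
              + norm (w t) * norm (blinfun_apply (\<Theta> (t, x t)) R)"
          unfolding w'eq by (rule rsip_add)
        also have "\<dots> \<le> lam * (norm (w t))\<^sup>2 + norm (w t) * (C * (C * \<epsilon> * norm (w t)))"
        proof (rule add_mono)
          show "rsip (w t) (Gop f \<Theta> \<Theta>' f' t (x t) (inv (blinfun_apply (\<Theta> (t, x t))) (w t))) \<le> lam * (norm (w t))\<^sup>2"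
            by (rule Mb[OF t0 wt])
          have "norm (blinfun_apply (\<Theta> (t, x t)) R) \<le> C * norm R" by (rule \<Theta>b[OF t0])
          also have "\<dots> \<le> C * (norm et * \<epsilon>)" using Rb C0 by (rule mult_left_mono)
          also have "\<dots> \<le> C * (C * \<psi> t * \<epsilon>)"
            using etb C0 \<epsilon> by (intro mult_left_mono mult_right_mono) auto
          finally show "norm (w t) * norm (blinfun_apply (\<Theta> (t, x t)) R) \<le> norm (w t) * (C * (C * \<epsilon> * norm (w t)))"
            unfolding \<psi>_def by (intro mult_left_mono) (auto simp: algebra_simps)
        qed
        also have "\<dots> = \<mu> * \<psi> t * norm (w t)" unfolding \<mu>_def \<psi>_def by (simp add: power2_eq_square algebra_simps)
        finally show ?thesis .
      qed
      show "norm (w' t) \<le> \<mu> * \<psi> t" if wt: "w t = 0"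
      proof -
        have "norm et \<le> 0" using etb wt unfolding \<psi>_def by simp
        then have et0: "et = 0" by simp
        then have "y t = x t" unfolding et_def by simp
        then have "w' t = 0" unfolding w'_def by simp
        then show ?thesis using wt unfolding \<psi>_def by simp
      qed
    qed
    then show "\<forall>\<^sub>F h in at_right 0. \<psi> (t + h) \<le> \<psi> t + h * (\<mu> * \<psi> t + e)" unfolding \<psi>_def .
  qed
  then show ?thesis unfolding \<psi>_def w_def \<mu>_def by simp
qed

end


context ode begin

lemma local_dep:
  assumes y: "sol T y" and T: "T \<ge> 0"
  shows "\<exists>r>0. \<exists>L\<ge>0. \<forall>a'. norm (a' - y 0) < r \<longrightarrow> (\<exists>y'. sol T y' \<and> y' 0 = a') \<and>
          (\<forall>y'. sol T y' \<longrightarrow> y' 0 = a' \<longrightarrow> (\<forall>t\<in>{0..T}. norm (y' t - y t) \<le> L * norm (a' - y 0)))"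
proof -
  obtain \<rho> B where \<rho>: "\<rho> > 0" "B \<ge> 0"
    and bnd0: "\<And>t u z. (t, u) \<in> (\<lambda>t. (t, y t)) ` {0..T} \<Longrightarrow> norm (z - u) < \<rho> \<Longrightarrow> norm (f' (t, z)) \<le> B"
    using tube_bound[OF sol_graph_compact[OF y T]] by blast
  have bnd: "norm (f' (t, z)) \<le> B" if "t \<in> {0..T}" "norm (z - y t) < \<rho>" for t z
    using bnd0[of t "y t" z] that by auto
  define L where "L = exp (B * T)"
  have L: "L > 0" unfolding L_def by simp
  have key: "(\<exists>y'. sol T y' \<and> y' 0 = a') \<and>
          (\<forall>y'. sol T y' \<longrightarrow> y' 0 = a' \<longrightarrow> (\<forall>t\<in>{0..T}. norm (y' t - y t) \<le> L * norm (a' - y 0)))"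
    if a': "norm (a' - y 0) < \<rho> / L" for a'
  proof
    have init: "norm (a' - y 0) * exp (B * T) < \<rho>" using a' L unfolding L_def by (simp add: pos_less_divide_eq)
    show "\<exists>y'. sol T y' \<and> y' 0 = a'" by (rule exist[OF y T \<rho>(2) bnd init])
    show "\<forall>y'. sol T y' \<longrightarrow> y' 0 = a' \<longrightarrow> (\<forall>t\<in>{0..T}. norm (y' t - y t) \<le> L * norm (a' - y 0))"
    proof (intro allI impI ballI)
      fix y' t assume y': "sol T y'" "y' 0 = a'" and t: "t \<in> {0..T}"
      have "norm (y' t - y t) \<le> exp (B * t) * norm (y' 0 - y 0)"
        using compare[OF y y'(1) T \<rho>(2) bnd] init y'(2) t by auto
      also have "\<dots> \<le> L * norm (a' - y 0)"
      proof -
        have "B * t \<le> B * T" using t \<rho>(2) by (intro mult_left_mono) auto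
        then have "exp (B * t) \<le> exp (B * T)" by simp
        then show ?thesis unfolding L_def using y'(2) by (simp add: mult_right_mono)
      qed
      finally show "norm (y' t - y t) \<le> L * norm (a' - y 0)" .
    qed
  qed
  show ?thesis
    apply (rule exI[of _ "\<rho> / L"])
    apply (rule conjI)
     apply (simp add: \<rho>(1) L)
    apply (rule exI[of _ L])
    using key L by auto
qed

lemma family_cont:
  assumes T: "T \<ge> 0" and X: "\<And>s. s \<in> S \<Longrightarrow> sol T (X s) \<and> X s 0 = p + s *\<^sub>R d"
  shows "continuous_on (S \<times> {0..T}) (\<lambda>(s, t). X s t)"
  unfolding continuous_on_iff
proof (intro ballI allI impI)
  fix q e assume q: "q \<in> S \<times> {0..T}" and e: "(e::real) > 0"
  obtain s t where st: "q = (s, t)" "s \<in> S" "t \<in> {0..T}" using q by auto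
  have Xs: "sol T (X s)" "X s 0 = p + s *\<^sub>R d" using X[OF st(2)] by auto
  obtain r L where rL: "r > 0" "L \<ge> 0"
    and ld: "\<And>a'. norm (a' - X s 0) < r \<Longrightarrow> (\<forall>y'. sol T y' \<longrightarrow> y' 0 = a' \<longrightarrow> (\<forall>t\<in>{0..T}. norm (y' t - X s t) \<le> L * norm (a' - X s 0)))"
    using local_dep[OF Xs(1) T] by blast
  have e2: "e/2 > 0" using e by simp
  obtain d1 where d1: "d1 > 0" "\<And>t'. t' \<in> {0..T} \<Longrightarrow> dist t' t < d1 \<Longrightarrow> dist (X s t') (X s t) < e/2"
    using sol_cont[OF Xs(1), unfolded continuous_on_iff, rule_format, OF st(3) e2] by blast
  define d2 where "d2 = min (r / (norm d + 1)) (e / (2 * (L + 1) * (norm d + 1)))"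
  have "r / (norm d + 1) > 0" using rL by (intro divide_pos_pos) (auto intro: add_nonneg_pos)
  moreover have "e / (2 * (L + 1) * (norm d + 1)) > 0" using rL e
    by (intro divide_pos_pos mult_pos_pos) (auto intro: add_nonneg_pos)
  ultimately have d2: "d2 > 0" unfolding d2_def by simp
  show "\<exists>\<delta>>0. \<forall>q'\<in>S \<times> {0..T}. dist q' q < \<delta> \<longrightarrow> dist ((\<lambda>(s, t). X s t) q') ((\<lambda>(s, t). X s t) q) < e"
  proof (intro exI[of _ "min d1 d2"] conjI ballI impI)
    show "0 < min d1 d2" using d1 d2 by simp
    fix q' assume q': "q' \<in> S \<times> {0..T}" and dq: "dist q' q < min d1 d2"
    obtain s' t' where st': "q' = (s', t')" "s' \<in> S" "t' \<in> {0..T}" using q' by auto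
    have ds: "\<bar>s' - s\<bar> < d2" and dt: "dist t' t < d1"
      using dist_fst_le[of q' q] dist_snd_le[of q' q] dq st st' by (auto simp: dist_real_def)
    have Xs': "sol T (X s')" "X s' 0 = p + s' *\<^sub>R d" using X[OF st'(2)] by auto
    have diff0: "X s' 0 - X s 0 = (s' - s) *\<^sub>R d" using Xs'(2) Xs(2) by (simp add: algebra_simps)
    have nd: "norm (X s' 0 - X s 0) = \<bar>s' - s\<bar> * norm d" unfolding diff0 by simp
    have "\<bar>s' - s\<bar> * norm d \<le> d2 * norm d" using ds by (intro mult_right_mono) auto
    also have "\<dots> < r"
    proof -
      have "d2 * norm d \<le> r / (norm d + 1) * norm d" unfolding d2_def by (intro mult_right_mono) auto
      also have "\<dots> < r"
      proof -
        have "r / (norm d + 1) * norm d = r * (norm d / (norm d + 1))" by simp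
        also have "\<dots> < r * 1"
        proof (rule mult_strict_left_mono)
          have pos: "norm d + 1 > 0" by (rule add_nonneg_pos) simp_all
          then show "norm d / (norm d + 1) < 1" by (simp add: divide_less_eq)
        qed (use rL in simp)
        finally show ?thesis by simp
      qed
      finally show ?thesis .
    qed
    finally have close: "norm (X s' 0 - X s 0) < r" using nd by simp
    have "norm (X s' t' - X s t') \<le> L * norm (X s' 0 - X s 0)"
      using ld[OF close] Xs'(1) st'(3) by auto
    also have "\<dots> = L * (\<bar>s' - s\<bar> * norm d)" using nd by simp
    also have "\<dots> \<le> L * (d2 * norm d)" using ds rL by (intro mult_left_mono mult_right_mono) auto
    also have "\<dots> < e/2"
    proof -
      have "L * (d2 * norm d) \<le> L * (e / (2 * (L + 1) * (norm d + 1)) * norm d)"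
        unfolding d2_def using rL by (intro mult_left_mono mult_right_mono) auto
      also have "\<dots> = e/2 * ((L / (L + 1)) * (norm d / (norm d + 1)))"
        using rL by (simp add: field_simps)
      also have "\<dots> < e/2"
      proof -
        have a: "L / (L + 1) < 1" using rL by simp
        have pos: "norm d + 1 > 0" by (rule add_nonneg_pos) simp_all
        then have b: "norm d / (norm d + 1) \<le> 1" by (simp add: divide_le_eq)
        have a0: "L / (L + 1) \<ge> 0" using rL by simp
        have "(L / (L + 1)) * (norm d / (norm d + 1)) \<le> (L / (L + 1)) * 1"
          by (rule mult_left_mono[OF b a0])
        then have "(L / (L + 1)) * (norm d / (norm d + 1)) < 1" using a by linarith
        from mult_strict_left_mono[OF this e2] show ?thesis by simp
      qed
      finally show ?thesis .
    qed
    finally have A: "dist (X s' t') (X s t') < e/2" by (simp add: dist_norm)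
    have Bd: "dist (X s t') (X s t) < e/2" using d1(2)[OF st'(3)] dt d1 by simp
    have "dist (X s' t') (X s t) \<le> dist (X s' t') (X s t') + dist (X s t') (X s t)" by (rule dist_triangle)
    also have "\<dots> < e" using A Bd by simp
    finally show "dist ((\<lambda>(s, t). X s t) q') ((\<lambda>(s, t). X s t) q) < e" using st st' by simp
  qed
qed

end


context ctr begin

lemma family_est:
  assumes T: "T \<ge> 0" and ab: "\<alpha> \<le> \<beta>"
    and X: "\<And>s. s \<in> {\<alpha>..\<beta>} \<Longrightarrow> sol T (X s) \<and> X s 0 = p + s *\<^sub>R d"
  shows "\<forall>t\<in>{0..T}. norm (X \<beta> t - X \<alpha> t) \<le> C * C * exp (lam * t) * ((\<beta> - \<alpha>) * norm d)"
proof
  fix t assume t: "t \<in> {0..T}"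
  have est: "norm (X \<beta> t - X \<alpha> t) \<le> C * C * exp ((lam + C * C * \<epsilon>) * t) * ((\<beta> - \<alpha>) * norm d)"
    if \<epsilon>: "\<epsilon> > 0" for \<epsilon>
  proof -
    define \<mu> where "\<mu> = lam + C * C * \<epsilon>"
    define Rect where "Rect = {\<alpha>..\<beta>} \<times> {0..T}"
    define Xp where "Xp q = X (fst q) (snd q)" for q
    have Xc: "continuous_on Rect Xp"
      using family_cont[OF T X, of "{\<alpha>..\<beta>}"] unfolding Rect_def Xp_def by (simp add: case_prod_beta)
    have Rc: "compact Rect" unfolding Rect_def by (intro compact_Times compact_Icc)
    define K where "K = (\<lambda>q. (snd q, Xp q)) ` Rect"
    have Kc: "compact K" unfolding K_def
      by (intro compact_continuous_image Rc continuous_on_Pair continuous_on_snd Xc continuous_on_id)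
    have Ksub: "K \<subseteq> {0..} \<times> UNIV" unfolding K_def Rect_def by auto
    obtain \<delta> where \<delta>: "\<delta> > 0" "\<And>k q. k \<in> K \<Longrightarrow> q \<in> {0..} \<times> UNIV \<Longrightarrow> dist q k < \<delta> \<Longrightarrow> dist (f' q) (f' k) < \<epsilon>"
      using unif_near_compact[OF Kc Ksub f'_cont \<epsilon>] by blast
    have "uniformly_continuous_on Rect Xp" by (rule compact_uniformly_continuous[OF Xc Rc])
    then obtain \<eta> where \<eta>: "\<eta> > 0" "\<And>q q'. q \<in> Rect \<Longrightarrow> q' \<in> Rect \<Longrightarrow> dist q' q < \<eta> \<Longrightarrow> dist (Xp q') (Xp q) < \<delta>"
      unfolding uniformly_continuous_on_def using \<delta>(1) by metis
    define N where "N = nat \<lceil>(\<beta> - \<alpha>) / \<eta>\<rceil> + 1"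
    have N1: "N \<ge> 1" unfolding N_def by simp
    have Npos: "real N > 0" using N1 by simp
    have "(\<beta> - \<alpha>) / \<eta> < real N" unfolding N_def by linarith
    then have "\<beta> - \<alpha> < real N * \<eta>" using \<eta>(1) by (simp add: divide_less_eq)
    then have hN: "(\<beta> - \<alpha>) / real N < \<eta>" using Npos by (simp add: divide_less_eq mult.commute)
    define h where "h = (\<beta> - \<alpha>) / real N"
    have h0: "h \<ge> 0" unfolding h_def using ab by simp
    define s where "s i = \<alpha> + real i * h" for i :: nat
    have sN: "s N = \<beta>" unfolding s_def h_def using Npos by simp
    have s0: "s 0 = \<alpha>" unfolding s_def by simp
    have sin: "s i \<in> {\<alpha>..\<beta>}" if "i \<le> N" for i
    proof -
      have "real i * h \<le> real N * h" using that h0 by (intro mult_right_mono) auto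
      then show ?thesis unfolding s_def using h0 sN unfolding s_def by auto
    qed
    have sdiff: "s (Suc i) - s i = h" for i unfolding s_def by (simp add: algebra_simps)
    have pair: "norm (X (s (Suc i)) t - X (s i) t) \<le> C * C * exp (\<mu> * t) * (h * norm d)" if i: "i < N" for i
    proof -
      define x where "x = X (s i)"
      define y where "y = X (s (Suc i))"
      have si: "s i \<in> {\<alpha>..\<beta>}" and si1: "s (Suc i) \<in> {\<alpha>..\<beta>}" using sin i by auto
      have x: "sol T x" "x 0 = p + s i *\<^sub>R d" using X[OF si] unfolding x_def by auto
      have y: "sol T y" "y 0 = p + s (Suc i) *\<^sub>R d" using X[OF si1] unfolding y_def by auto
      have lin: "norm (f' (\<tau>, x \<tau> + \<sigma> *\<^sub>R (y \<tau> - x \<tau>)) - f' (\<tau>, x \<tau>)) \<le> \<epsilon>"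
        if \<tau>: "\<tau> \<in> {0..T}" and \<sigma>: "\<sigma> \<in> {0..1}" for \<tau> \<sigma>
      proof -
        have q1: "(s i, \<tau>) \<in> Rect" and q2: "(s (Suc i), \<tau>) \<in> Rect" unfolding Rect_def using si si1 \<tau> by auto
        have "dist (s (Suc i), \<tau>) (s i, \<tau>) = h" using sdiff h0 by (simp add: dist_Pair_Pair dist_real_def)
        then have "dist (Xp (s (Suc i), \<tau>)) (Xp (s i, \<tau>)) < \<delta>" using \<eta>(2)[OF q1 q2] hN unfolding h_def by simp
        then have dyx: "norm (y \<tau> - x \<tau>) < \<delta>" unfolding Xp_def x_def y_def by (simp add: dist_norm)
        have "norm (x \<tau> + \<sigma> *\<^sub>R (y \<tau> - x \<tau>) - x \<tau>) = \<sigma> * norm (y \<tau> - x \<tau>)" using \<sigma> by simp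
        also have "\<dots> \<le> 1 * norm (y \<tau> - x \<tau>)" using \<sigma> by (intro mult_right_mono) auto
        finally have dz: "dist (\<tau>, x \<tau> + \<sigma> *\<^sub>R (y \<tau> - x \<tau>)) (\<tau>, x \<tau>) < \<delta>"
          using dyx by (simp add: dist_Pair_Pair dist_norm)
        have k: "(\<tau>, x \<tau>) \<in> K" unfolding K_def x_def Xp_def using q1 by (auto intro!: image_eqI[where x="(s i, \<tau>)"])
        have "dist (f' (\<tau>, x \<tau> + \<sigma> *\<^sub>R (y \<tau> - x \<tau>))) (f' (\<tau>, x \<tau>)) < \<epsilon>"
          by (rule \<delta>(2)[OF k _ dz]) (use \<tau> in auto)
        then show ?thesis by (simp add: dist_norm)
      qed
      have tp: "norm (blinfun_apply (\<Theta> (t, x t)) (y t - x t)) \<le> exp (\<mu> * t) * norm (blinfun_apply (\<Theta> (0, x 0)) (y 0 - x 0))"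
        using two_point[OF x(1) y(1) T less_imp_le[OF \<epsilon>] lin] t unfolding \<mu>_def by auto
      have "y 0 - x 0 = h *\<^sub>R d" using x(2) y(2) sdiff[of i] by (simp add: algebra_simps scaleR_diff_left[symmetric])
      then have "norm (blinfun_apply (\<Theta> (0, x 0)) (y 0 - x 0)) \<le> C * (h * norm d)"
        using \<Theta>b[of 0 "x 0" "h *\<^sub>R d"] h0 by simp
      then have A: "norm (blinfun_apply (\<Theta> (t, x t)) (y t - x t)) \<le> exp (\<mu> * t) * (C * (h * norm d))"
        using tp by (meson exp_ge_zero mult_left_mono order_trans)
      have "norm (y t - x t) \<le> C * norm (blinfun_apply (\<Theta> (t, x t)) (y t - x t))"
        by (rule \<Theta>inv) (use t in simp)
      also have "\<dots> \<le> C * (exp (\<mu> * t) * (C * (h * norm d)))" using A C0 by (rule mult_left_mono)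
      also have "\<dots> = C * C * exp (\<mu> * t) * (h * norm d)" by (simp add: algebra_simps)
      finally show ?thesis unfolding x_def y_def .
    qed
    have "X \<beta> t - X \<alpha> t = (\<Sum>i<N. X (s (Suc i)) t - X (s i) t)"
      using sum_lessThan_telescope[of "\<lambda>i. X (s i) t" N] sN s0 by simp
    then have "norm (X \<beta> t - X \<alpha> t) \<le> (\<Sum>i<N. norm (X (s (Suc i)) t - X (s i) t))"
      by (simp add: norm_sum)
    also have "\<dots> \<le> (\<Sum>i<N. C * C * exp (\<mu> * t) * (h * norm d))"
      by (rule sum_mono) (use pair in auto)
    also have "\<dots> = C * C * exp (\<mu> * t) * ((\<beta> - \<alpha>) * norm d)"
      unfolding h_def using Npos by (simp add: field_simps)
    finally show ?thesis unfolding \<mu>_def .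
  qed
  have lim: "((\<lambda>\<epsilon>. C * C * exp ((lam + C * C * \<epsilon>) * t) * ((\<beta> - \<alpha>) * norm d))
        \<longlongrightarrow> C * C * exp ((lam + C * C * 0) * t) * ((\<beta> - \<alpha>) * norm d)) (at_right 0)"
    by (intro tendsto_intros)
  have ev: "\<forall>\<^sub>F \<epsilon> in at_right 0. norm (X \<beta> t - X \<alpha> t) \<le> C * C * exp ((lam + C * C * \<epsilon>) * t) * ((\<beta> - \<alpha>) * norm d)"
    using eventually_at_right_less[of 0] by (rule eventually_mono) (rule est)
  have "norm (X \<beta> t - X \<alpha> t) \<le> C * C * exp ((lam + C * C * 0) * t) * ((\<beta> - \<alpha>) * norm d)"
    by (rule tendsto_le[OF trivial_limit_at_right_real lim tendsto_const ev])
  then show "norm (X \<beta> t - X \<alpha> t) \<le> C * C * exp (lam * t) * ((\<beta> - \<alpha>) * norm d)" by simp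
qed

end


lemma aux_field: "(m::real) > 0 \<Longrightarrow> E > 0 \<Longrightarrow> 2 * (\<rho> / (4 * m * E)) * n * E = \<rho> / 2 * (n / m)"
  by (simp add: field_simps)

context ode begin

lemma ext_limit:
  assumes T: "T \<ge> 0" and Yc: "continuous_on {0..T} Y"
    and appr: "\<And>\<eta>. \<eta> > 0 \<Longrightarrow> \<exists>s0 x. \<sigma> - \<eta> < s0 \<and> s0 \<le> \<sigma> \<and> sol T x \<and> x 0 = p + s0 *\<^sub>R d \<and>
                  (\<forall>t\<in>{0..T}. norm (x t - Y t) < \<eta>)"
  shows "\<exists>r>0. \<forall>s'. \<sigma> \<le> s' \<and> s' < \<sigma> + r \<longrightarrow> (\<exists>y. sol T y \<and> y 0 = p + s' *\<^sub>R d)"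
proof -
  have Kc: "compact ((\<lambda>t. (t, Y t)) ` {0..T})"
    by (intro compact_continuous_image continuous_intros Yc) auto
  have Ks: "(\<lambda>t. (t, Y t)) ` {0..T} \<subseteq> {0..} \<times> UNIV" by auto
  obtain \<rho> B where \<rho>: "\<rho> > 0" "B \<ge> 0"
    and bnd0: "\<And>t u z. (t, u) \<in> (\<lambda>t. (t, Y t)) ` {0..T} \<Longrightarrow> norm (z - u) < \<rho> \<Longrightarrow> norm (f' (t, z)) \<le> B"
    using tube_bound[OF Kc Ks] by blast
  define E where "E = exp (B * T)"
  have E: "E > 0" unfolding E_def by simp
  have nd: "norm d + 1 > 0" by (rule add_nonneg_pos) simp_all
  define r where "r = \<rho> / (4 * (norm d + 1) * E)"
  have r: "r > 0" unfolding r_def using \<rho> E nd by simp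
  define \<eta> where "\<eta> = min (\<rho>/2) r"
  have \<eta>: "\<eta> > 0" unfolding \<eta>_def using \<rho> r by simp
  obtain s0 x where s0: "\<sigma> - \<eta> < s0" "s0 \<le> \<sigma>" and x: "sol T x" "x 0 = p + s0 *\<^sub>R d"
    and xY: "\<And>t. t \<in> {0..T} \<Longrightarrow> norm (x t - Y t) < \<eta>"
    using appr[OF \<eta>] by blast
  have bnd: "norm (f' (t, z)) \<le> B" if t: "t \<in> {0..T}" and z: "norm (z - x t) < \<rho>/2" for t z
  proof -
    have "norm (z - Y t) \<le> norm (z - x t) + norm (x t - Y t)"
      using norm_triangle_ineq[of "z - x t" "x t - Y t"] by simp
    also have "\<dots> < \<rho>/2 + \<rho>/2" using z xY[OF t] unfolding \<eta>_def by simp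
    finally show ?thesis using bnd0[of t "Y t" z] t by auto
  qed
  show ?thesis
  proof (intro exI[of _ r] conjI allI impI)
    show "r > 0" by fact
    fix s' assume s': "\<sigma> \<le> s' \<and> s' < \<sigma> + r"
    have ds: "0 \<le> s' - s0" "s' - s0 < 2 * r" using s' s0 unfolding \<eta>_def by auto
    have "p + s' *\<^sub>R d - x 0 = (s' - s0) *\<^sub>R d" using x(2) by (simp add: algebra_simps)
    then have "norm (p + s' *\<^sub>R d - x 0) = (s' - s0) * norm d" using ds by simp
    also have "\<dots> \<le> 2 * r * norm d" using ds by (intro mult_right_mono) auto
    finally have a: "norm (p + s' *\<^sub>R d - x 0) * E \<le> 2 * r * norm d * E" using E by (simp add: mult_right_mono)
    also have "\<dots> = \<rho> / 2 * (norm d / (norm d + 1))" unfolding r_def by (rule aux_field[OF nd E])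
    also have "\<dots> < \<rho> / 2 * 1"
      using \<rho> nd by (intro mult_strict_left_mono) (simp_all add: divide_less_eq)
    finally have init: "norm (p + s' *\<^sub>R d - x 0) * exp (B * T) < \<rho> / 2" unfolding E_def by simp
    show "\<exists>y. sol T y \<and> y 0 = p + s' *\<^sub>R d" by (rule exist[OF x(1) T \<rho>(2) bnd init])
  qed
qed

end


lemma limit_family:
  fixes Z :: "real \<Rightarrow> 'a::banach"
  assumes \<sigma>: "\<sigma> > 0" and K: "K \<ge> 0"
    and est: "\<And>s s'. 0 \<le> s \<Longrightarrow> s \<le> s' \<Longrightarrow> s' < \<sigma> \<Longrightarrow> norm (Z s' - Z s) \<le> K * (s' - s)"
  shows "\<exists>Y. \<forall>s. 0 \<le> s \<and> s < \<sigma> \<longrightarrow> norm (Z s - Y) \<le> K * (\<sigma> - s)"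
proof -
  define sq where "sq n = \<sigma> - (\<sigma>/2) * inverse (real (Suc n))" for n
  have inv: "0 < inverse (real (Suc n))" "inverse (real (Suc n)) \<le> 1" for n
    by (auto simp: inverse_le_1_iff)
  have sq: "0 \<le> sq n" "sq n < \<sigma>" for n
  proof -
    have "(\<sigma>/2) * inverse (real (Suc n)) \<le> (\<sigma>/2) * 1" using \<sigma> inv(2)[of n] by (intro mult_left_mono) auto
    then show "0 \<le> sq n" unfolding sq_def using \<sigma> by simp
    have "0 < (\<sigma>/2) * inverse (real (Suc n))" using \<sigma> inv(1)[of n] by simp
    then show "sq n < \<sigma>" unfolding sq_def by simp
  qed
  have sqlim: "sq \<longlonglongrightarrow> \<sigma> - (\<sigma>/2) * 0"
    unfolding sq_def by (intro tendsto_intros LIMSEQ_inverse_real_of_nat)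
  then have sqlim': "sq \<longlonglongrightarrow> \<sigma>" by simp
  have lip: "dist (Z (sq m)) (Z (sq n)) \<le> K * dist (sq m) (sq n)" for m n
  proof (cases "sq m \<le> sq n")
    case True
    then have "norm (Z (sq n) - Z (sq m)) \<le> K * (sq n - sq m)" using est sq by blast
    then show ?thesis using True by (simp add: dist_norm norm_minus_commute dist_real_def)
  next
    case False
    then have "norm (Z (sq m) - Z (sq n)) \<le> K * (sq m - sq n)" using est sq by force
    then show ?thesis using False by (simp add: dist_norm dist_real_def)
  qed
  have "Cauchy sq" using sqlim' by (rule LIMSEQ_imp_Cauchy)
  have "Cauchy (\<lambda>n. Z (sq n))"
  proof (rule metric_CauchyI)
    fix e :: real assume e: "e > 0"
    have "e / (K + 1) > 0" using e K by simp
    then obtain M where M: "\<And>m n. m \<ge> M \<Longrightarrow> n \<ge> M \<Longrightarrow> dist (sq m) (sq n) < e / (K + 1)"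
      using \<open>Cauchy sq\<close> unfolding Cauchy_def by blast
    show "\<exists>M. \<forall>m\<ge>M. \<forall>n\<ge>M. dist (Z (sq m)) (Z (sq n)) < e"
    proof (intro exI[of _ M] allI impI)
      fix m n assume mn: "m \<ge> M" "n \<ge> M"
      have "dist (Z (sq m)) (Z (sq n)) \<le> K * dist (sq m) (sq n)" by (rule lip)
      also have "\<dots> \<le> K * (e / (K + 1))" using M[OF mn] K by (intro mult_left_mono) auto
      also have "\<dots> < e" using e K by (simp add: field_simps)
      finally show "dist (Z (sq m)) (Z (sq n)) < e" .
    qed
  qed
  then obtain Y where Y: "(\<lambda>n. Z (sq n)) \<longlonglongrightarrow> Y"
    unfolding Cauchy_convergent_iff convergent_def by blast
  show ?thesis
  proof (intro exI[of _ Y] allI impI)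
    fix s assume s: "0 \<le> s \<and> s < \<sigma>"
    have ev: "\<forall>\<^sub>F n in sequentially. s < sq n" using order_tendstoD(1)[OF sqlim'] s by blast
    have "(\<lambda>n. norm (Z s - Z (sq n))) \<longlonglongrightarrow> norm (Z s - Y)" by (intro tendsto_intros Y)
    moreover have "\<forall>\<^sub>F n in sequentially. norm (Z s - Z (sq n)) \<le> K * (\<sigma> - s)"
      using ev
    proof (rule eventually_mono)
      fix n assume sn: "s < sq n"
      have "norm (Z (sq n) - Z s) \<le> K * (sq n - s)" using est[of s "sq n"] s sn sq by simp
      also have "\<dots> \<le> K * (\<sigma> - s)" using sq(2)[of n] K by (intro mult_left_mono) auto
      finally show "norm (Z s - Z (sq n)) \<le> K * (\<sigma> - s)" by (simp add: norm_minus_commute)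
    qed
    ultimately show "norm (Z s - Y) \<le> K * (\<sigma> - s)"
      by (rule tendsto_le[OF trivial_limit_sequentially tendsto_const])
  qed
qed

context ctr begin

lemma global:
  assumes T: "T \<ge> 0" and y0: "sol T y0" and y0p: "y0 0 = p"
  shows "\<forall>s\<in>{0..1}. \<exists>y. sol T y \<and> y 0 = p + s *\<^sub>R d"
proof -
  define ok where "ok \<sigma> \<longleftrightarrow> (\<forall>s\<in>{0..\<sigma>}. \<exists>y. sol T y \<and> y 0 = p + s *\<^sub>R d)" for \<sigma>
  define Xf where "Xf s = (SOME y. sol T y \<and> y 0 = p + s *\<^sub>R d)" for s
  have Xf: "sol T (Xf s) \<and> Xf s 0 = p + s *\<^sub>R d" if "ok \<sigma>" "s \<in> {0..\<sigma>}" for \<sigma> s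
  proof -
    have "\<exists>y. sol T y \<and> y 0 = p + s *\<^sub>R d" using that unfolding ok_def by blast
    then show ?thesis unfolding Xf_def by (rule someI_ex)
  qed
  define Kc where "Kc = C * C * exp (\<bar>lam\<bar> * T) * norm d"
  have Kc0: "Kc \<ge> 0" unfolding Kc_def by simp
  have est: "norm (Xf s' t - Xf s t) \<le> Kc * (s' - s)"
    if "ok \<sigma>" "0 \<le> s" "s \<le> s'" "s' \<le> \<sigma>" "t \<in> {0..T}" for \<sigma> s s' t
  proof -
    have "\<forall>t\<in>{0..T}. norm (Xf s' t - Xf s t) \<le> C * C * exp (lam * t) * ((s' - s) * norm d)"
      by (rule family_est[OF T \<open>s \<le> s'\<close>]) (use Xf[OF \<open>ok \<sigma>\<close>] that in auto)
    then have "norm (Xf s' t - Xf s t) \<le> C * C * exp (lam * t) * ((s' - s) * norm d)" using that by blast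
    also have "\<dots> \<le> C * C * exp (\<bar>lam\<bar> * T) * ((s' - s) * norm d)"
    proof -
      have "lam * t \<le> \<bar>lam\<bar> * T"
      proof -
        have "lam * t \<le> \<bar>lam\<bar> * t" using that by (intro mult_right_mono) auto
        also have "\<dots> \<le> \<bar>lam\<bar> * T" using that by (intro mult_left_mono) auto
        finally show ?thesis .
      qed
      then have "exp (lam * t) \<le> exp (\<bar>lam\<bar> * T)" by simp
      then show ?thesis using that by (intro mult_right_mono mult_left_mono) auto
    qed
    also have "\<dots> = Kc * (s' - s)" unfolding Kc_def by simp
    finally show ?thesis .
  qed
  have ok0: "ok 0" unfolding ok_def using y0 y0p by auto
  have okmono: "ok \<sigma>'" if "ok \<sigma>" "\<sigma>' \<le> \<sigma>" for \<sigma> \<sigma>' using that unfolding ok_def by auto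
  define S where "S = {\<sigma>\<in>{0..1}. ok \<sigma>}"
  define \<sigma>s where "\<sigma>s = Sup S"
  have Sne: "0 \<in> S" unfolding S_def using ok0 by simp
  have bdd: "bdd_above S" unfolding S_def by (auto intro: bdd_aboveI[where M=1])
  have \<sigma>s0: "0 \<le> \<sigma>s" unfolding \<sigma>s_def using cSup_upper[OF Sne bdd] .
  have Sne': "S \<noteq> {}" using Sne by blast
  have \<sigma>s1: "\<sigma>s \<le> 1" unfolding \<sigma>s_def
  proof (rule cSup_least[OF Sne'])
    fix x assume "x \<in> S" then show "x \<le> 1" unfolding S_def by simp
  qed
  have okb: "ok \<sigma>" if lt: "\<sigma> < \<sigma>s" for \<sigma>
  proof -
    have "\<exists>x\<in>S. \<sigma> < x" using less_cSupD[OF Sne' lt[unfolded \<sigma>s_def]] .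
    then obtain \<sigma>' where "\<sigma>' \<in> S" "\<sigma> < \<sigma>'" by blast
    then show ?thesis using okmono unfolding S_def by auto
  qed
  have Ext: "\<exists>r>0. \<forall>s'. \<sigma>s \<le> s' \<and> s' < \<sigma>s + r \<longrightarrow> (\<exists>y. sol T y \<and> y 0 = p + s' *\<^sub>R d)"
  proof (cases "ok \<sigma>s")
    case True
    have X: "sol T (Xf \<sigma>s)" "Xf \<sigma>s 0 = p + \<sigma>s *\<^sub>R d" using Xf[OF True, of \<sigma>s] \<sigma>s0 by auto
    show ?thesis
    proof (rule ext_limit[OF T sol_cont[OF X(1)]])
      fix \<eta> :: real assume "\<eta> > 0"
      then show "\<exists>s0 x. \<sigma>s - \<eta> < s0 \<and> s0 \<le> \<sigma>s \<and> sol T x \<and> x 0 = p + s0 *\<^sub>R d \<and>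
                  (\<forall>t\<in>{0..T}. norm (x t - Xf \<sigma>s t) < \<eta>)"
        using X by (intro exI[of _ \<sigma>s] exI[of _ "Xf \<sigma>s"]) auto
    qed
  next
    case False
    then have \<sigma>pos: "\<sigma>s > 0" using ok0 \<sigma>s0 by (cases "\<sigma>s = 0") auto
    have "\<forall>t\<in>{0..T}. \<exists>Yt. \<forall>s. 0 \<le> s \<and> s < \<sigma>s \<longrightarrow> norm (Xf s t - Yt) \<le> Kc * (\<sigma>s - s)"
    proof
      fix t assume t: "t \<in> {0..T}"
      show "\<exists>Yt. \<forall>s. 0 \<le> s \<and> s < \<sigma>s \<longrightarrow> norm (Xf s t - Yt) \<le> Kc * (\<sigma>s - s)"
      proof (rule limit_family[OF \<sigma>pos Kc0])
        fix s s' :: real assume "0 \<le> s" "s \<le> s'" "s' < \<sigma>s"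
        then show "norm (Xf s' t - Xf s t) \<le> Kc * (s' - s)"
          using est[OF okb[OF \<open>s' < \<sigma>s\<close>] _ _ order_refl t] by simp
      qed
    qed
    from bchoice[OF this] obtain Y where Y0: "\<forall>t\<in>{0..T}. \<forall>s. 0 \<le> s \<and> s < \<sigma>s \<longrightarrow> norm (Xf s t - Y t) \<le> Kc * (\<sigma>s - s)"
      by blast
    have Y: "norm (Xf s t - Y t) \<le> Kc * (\<sigma>s - s)" if "t \<in> {0..T}" "0 \<le> s" "s < \<sigma>s" for t s
      using Y0 that by blast
    have pick: "\<exists>s. 0 \<le> s \<and> s < \<sigma>s \<and> \<sigma>s - e < s \<and> Kc * (\<sigma>s - s) < e" if e: "e > 0" for e
    proof -
      define \<eta> where "\<eta> = min \<sigma>s (e / (Kc + 1)) / 2"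
      have \<eta>1: "\<eta> > 0" unfolding \<eta>_def using \<sigma>pos e Kc0 by auto
      have m1: "min \<sigma>s (e / (Kc + 1)) \<le> \<sigma>s" "min \<sigma>s (e / (Kc + 1)) \<le> e / (Kc + 1)" by simp_all
      have \<eta>2: "\<eta> \<le> \<sigma>s / 2" unfolding \<eta>_def by (rule divide_right_mono[OF m1(1)]) simp
      have \<eta>3: "\<eta> \<le> e / (Kc + 1) / 2" unfolding \<eta>_def by (rule divide_right_mono[OF m1(2)]) simp
      note \<eta> = \<eta>1 \<eta>2 \<eta>3
      have "Kc * \<eta> \<le> Kc * (e / (Kc + 1) / 2)" using \<eta> Kc0 by (intro mult_left_mono) auto
      also have "\<dots> = (e / 2) * (Kc / (Kc + 1))" by (simp add: algebra_simps)
      also have "\<dots> \<le> (e / 2) * 1"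
      proof (rule mult_left_mono)
        have "Kc + 1 > 0" using Kc0 by simp
        then show "Kc / (Kc + 1) \<le> 1" by (simp add: divide_le_eq)
      qed (use e in simp)
      also have "\<dots> < e" using e by simp
      finally have A: "Kc * \<eta> < e" .
      have "\<eta> < e"
      proof -
        define q where "q = e / (Kc + 1)"
        have "q \<le> e / 1" unfolding q_def by (rule divide_left_mono) (use e Kc0 in auto)
        then have "q / 2 < e" using e by linarith
        then have "e / (Kc + 1) / 2 < e" unfolding q_def .
        then show ?thesis using \<eta> by linarith
      qed
      then show ?thesis using \<eta> A by (intro exI[of _ "\<sigma>s - \<eta>"]) auto
    qed
    have Yc: "continuous_on {0..T} Y"
      unfolding continuous_on_iff
    proof (intro ballI allI impI)
      fix t e assume t: "t \<in> {0..T}" and e: "(e::real) > 0"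
      obtain s where s: "0 \<le> s" "s < \<sigma>s" "Kc * (\<sigma>s - s) < e/3" using pick[of "e/3"] e by auto
      have oks: "ok s" using okb s by simp
      have "continuous_on {0..T} (Xf s)" using Xf[OF oks, of s] s by (intro sol_cont) auto
      moreover have e3: "e/3 > 0" using e by simp
      ultimately obtain d where d: "d > 0" "\<And>t'. t' \<in> {0..T} \<Longrightarrow> dist t' t < d \<Longrightarrow> dist (Xf s t') (Xf s t) < e/3"
        unfolding continuous_on_iff using t by blast
      show "\<exists>d>0. \<forall>t'\<in>{0..T}. dist t' t < d \<longrightarrow> dist (Y t') (Y t) < e"
      proof (intro exI[of _ d] conjI ballI impI)
        show "d > 0" by fact
        fix t' assume t': "t' \<in> {0..T}" "dist t' t < d"
        have "dist (Y t') (Y t) \<le> dist (Y t') (Xf s t') + dist (Xf s t') (Xf s t) + dist (Xf s t) (Y t)"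
          using dist_triangle[of "Y t'" "Xf s t" "Xf s t'"] dist_triangle[of "Y t'" "Y t" "Xf s t"] by linarith
        also have "\<dots> < e/3 + e/3 + e/3"
        proof -
          have "dist (Y t') (Xf s t') < e/3" using Y[OF t'(1) s(1,2)] s(3) by (simp add: dist_norm norm_minus_commute)
          moreover have "dist (Xf s t') (Xf s t) < e/3" using d(2)[OF t'] .
          moreover have "dist (Xf s t) (Y t) < e/3" using Y[OF t s(1,2)] s(3) by (simp add: dist_norm)
          ultimately show ?thesis by linarith
        qed
        finally show "dist (Y t') (Y t) < e" by simp
      qed
    qed
    show ?thesis
    proof (rule ext_limit[OF T Yc])
      fix \<eta> :: real assume \<eta>: "\<eta> > 0"
      obtain s where s: "0 \<le> s" "s < \<sigma>s" "\<sigma>s - \<eta> < s" "Kc * (\<sigma>s - s) < \<eta>" using pick[OF \<eta>] by auto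
      have oks: "ok s" using okb s by simp
      have X: "sol T (Xf s)" "Xf s 0 = p + s *\<^sub>R d" using Xf[OF oks, of s] s by auto
      have "\<forall>t\<in>{0..T}. norm (Xf s t - Y t) < \<eta>"
      proof
        fix t assume t: "t \<in> {0..T}"
        show "norm (Xf s t - Y t) < \<eta>" using Y[OF t s(1,2)] s(4) by linarith
      qed
      then show "\<exists>s0 x. \<sigma>s - \<eta> < s0 \<and> s0 \<le> \<sigma>s \<and> sol T x \<and> x 0 = p + s0 *\<^sub>R d \<and>
                  (\<forall>t\<in>{0..T}. norm (x t - Y t) < \<eta>)"
        using X s by (intro exI[of _ s] exI[of _ "Xf s"]) auto
    qed
  qed
  then obtain r where r: "r > 0" "\<And>s'. \<sigma>s \<le> s' \<Longrightarrow> s' < \<sigma>s + r \<Longrightarrow> \<exists>y. sol T y \<and> y 0 = p + s' *\<^sub>R d"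
    by blast
  have okext: "ok \<sigma>'" if "\<sigma>' < \<sigma>s + r" for \<sigma>'
    unfolding ok_def
  proof
    fix s assume s: "s \<in> {0..\<sigma>'}"
    show "\<exists>y. sol T y \<and> y 0 = p + s *\<^sub>R d"
    proof (cases "s < \<sigma>s")
      case True
      then show ?thesis using okb[OF True] s unfolding ok_def by auto
    next
      case False
      then show ?thesis using r(2)[of s] s that by auto
    qed
  qed
  have "\<sigma>s = 1"
  proof (rule ccontr)
    assume "\<sigma>s \<noteq> 1"
    then have lt: "\<sigma>s < 1" using \<sigma>s1 by simp
    define \<sigma>' where "\<sigma>' = min 1 (\<sigma>s + r/2)"
    have "ok \<sigma>'" using okext r(1) unfolding \<sigma>'_def by simp
    then have "\<sigma>' \<in> S" unfolding S_def \<sigma>'_def using \<sigma>s0 r(1) by auto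
    then have "\<sigma>' \<le> \<sigma>s" unfolding \<sigma>s_def by (rule cSup_upper[OF _ bdd])
    then show False unfolding \<sigma>'_def using lt r(1) by simp
  qed
  then have "ok 1" using okext r(1) by simp
  then show ?thesis unfolding ok_def by blast
qed

end



theorem mainTheorem3:
  fixes f :: "real \<times> 'v::banach \<Rightarrow> 'v"
    and f' :: "real \<times> 'v \<Rightarrow> (real \<times> 'v) \<Rightarrow>\<^sub>L 'v"
    and \<Theta> :: "real \<times> 'v \<Rightarrow> ('v \<Rightarrow>\<^sub>L 'w::banach)"
    and \<Theta>' :: "real \<times> 'v \<Rightarrow> (real \<times> 'v) \<Rightarrow>\<^sub>L ('v \<Rightarrow>\<^sub>L 'w)"
    and C lam :: real
    and u1 u2 :: "real \<Rightarrow> 'v"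
  assumes f_deriv: "\<And>p. p \<in> {0..} \<times> UNIV \<Longrightarrow>
             (f has_derivative blinfun_apply (f' p)) (at p within {0..} \<times> UNIV)"
    and f'_cont: "continuous_on ({0..} \<times> UNIV) f'"
    and \<Theta>_deriv: "\<And>p. p \<in> {0..} \<times> UNIV \<Longrightarrow>
             (\<Theta> has_derivative blinfun_apply (\<Theta>' p)) (at p within {0..} \<times> UNIV)"
    and \<Theta>'_cont: "continuous_on ({0..} \<times> UNIV) \<Theta>'"
    and \<Theta>_GL: "\<And>t u. t \<ge> 0 \<Longrightarrow> bij (blinfun_apply (\<Theta> (t,u)))"
    and C_fin: "bdd_above ((\<lambda>(t,u). max (norm (\<Theta> (t,u))) (onorm (inv (blinfun_apply (\<Theta> (t,u))))))
                    ` ({0..} \<times> UNIV))"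
    and C_def: "C = (SUP (t,u)\<in>{0..} \<times> UNIV.
                    max (norm (\<Theta> (t,u))) (onorm (inv (blinfun_apply (\<Theta> (t,u))))))"
    and M_bound: "\<And>t u. t \<ge> 0 \<Longrightarrow>
             logM (Gop f \<Theta> \<Theta>' f' t u \<circ> inv (blinfun_apply (\<Theta> (t,u)))) \<le> lam"
    and u1_sol: "\<And>t. t \<ge> 0 \<Longrightarrow> (u1 has_vector_derivative f (t, u1 t)) (at t within {0..})"
    and u2_sol: "\<And>t. t \<ge> 0 \<Longrightarrow> (u2 has_vector_derivative f (t, u2 t)) (at t within {0..})"
  shows "\<forall>t\<ge>0. norm (u1 t - u2 t) \<le> C\<^sup>2 * exp (lam * t) * norm (u1 0 - u2 0)"
proof -
  have Cub: "max (norm (\<Theta> (t,u))) (onorm (inv (blinfun_apply (\<Theta> (t,u))))) \<le> C" if "t \<ge> 0" for t u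
  proof -
    have "(\<lambda>(t,u). max (norm (\<Theta> (t,u))) (onorm (inv (blinfun_apply (\<Theta> (t,u)))))) (t, u) \<le> C"
      unfolding C_def by (rule cSUP_upper[OF _ C_fin]) (use that in auto)
    then show ?thesis by simp
  qed
  have invbl: "bounded_linear (inv (blinfun_apply (\<Theta> (t,u))))" if "t \<ge> 0" for t u
    by (rule bounded_inverse[OF blinfun.bounded_linear_right \<Theta>_GL[OF that]])
  interpret c: ctr f f' \<Theta> \<Theta>' C lam
  proof
    show "\<And>p. p \<in> {0..} \<times> UNIV \<Longrightarrow> (f has_derivative blinfun_apply (f' p)) (at p within {0..} \<times> UNIV)"
      by (rule f_deriv)
    show "continuous_on ({0..} \<times> UNIV) f'" by (rule f'_cont)
    show "\<And>p. p \<in> {0..} \<times> UNIV \<Longrightarrow> (\<Theta> has_derivative blinfun_apply (\<Theta>' p)) (at p within {0..} \<times> UNIV)"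
      by (rule \<Theta>_deriv)
    show "\<And>t u. 0 \<le> t \<Longrightarrow> bij (blinfun_apply (\<Theta> (t, u)))" by (rule \<Theta>_GL)
    show "norm (blinfun_apply (\<Theta> (t, u)) v) \<le> C * norm v" if "0 \<le> t" for t u v
    proof -
      have "norm (blinfun_apply (\<Theta> (t, u)) v) \<le> norm (\<Theta> (t, u)) * norm v" by (rule norm_blinfun)
      also have "\<dots> \<le> C * norm v" using Cub[OF that, of u] by (intro mult_right_mono) auto
      finally show ?thesis .
    qed
    show "norm v \<le> C * norm (blinfun_apply (\<Theta> (t, u)) v)" if t: "0 \<le> t" for t u v
    proof -
      have "v = inv (blinfun_apply (\<Theta> (t, u))) (blinfun_apply (\<Theta> (t, u)) v)"
        using \<Theta>_GL[OF t] by (simp add: bij_is_inj)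
      then have "norm v = norm (inv (blinfun_apply (\<Theta> (t, u))) (blinfun_apply (\<Theta> (t, u)) v))" by simp
      also have "\<dots> \<le> onorm (inv (blinfun_apply (\<Theta> (t, u)))) * norm (blinfun_apply (\<Theta> (t, u)) v)"
        by (rule onorm[OF invbl[OF t]])
      also have "\<dots> \<le> C * norm (blinfun_apply (\<Theta> (t, u)) v)" using Cub[OF t, of u] by (intro mult_right_mono) auto
      finally show ?thesis .
    qed
    show "rsip w (Gop f \<Theta> \<Theta>' f' t u (inv (blinfun_apply (\<Theta> (t, u))) w)) \<le> lam * (norm w)\<^sup>2"
      if t: "0 \<le> t" and w: "w \<noteq> 0" for t u w
    proof -
      have blG: "bounded_linear (Gop f \<Theta> \<Theta>' f' t u)"
        unfolding Gop_def
        by (intro bounded_linear_add bounded_linear_compose[OF blinfun.bounded_linear_right]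
            blinfun.bounded_linear_right bounded_linear_compose[OF blinfun.bounded_linear_right] bounded_linear_Pair
            bounded_linear_zero bounded_linear_ident)
      have bl: "bounded_linear (Gop f \<Theta> \<Theta>' f' t u \<circ> inv (blinfun_apply (\<Theta> (t,u))))"
        unfolding o_def by (rule bounded_linear_compose[OF blG invbl[OF t]])
      have "rsip w ((Gop f \<Theta> \<Theta>' f' t u \<circ> inv (blinfun_apply (\<Theta> (t,u)))) w) \<le> lam * (norm w)\<^sup>2"
        by (rule logM_le[OF bl M_bound[OF t] w])
      then show ?thesis by simp
    qed
    show "0 \<le> C" using Cub[of 0 0] norm_ge_zero[of "\<Theta> (0, 0)"] by linarith
  qed
  show ?thesis
  proof (intro allI impI)
    fix t :: real assume t: "t \<ge> 0"
    have solT: "c.sol t u" if "\<And>s. s \<ge> 0 \<Longrightarrow> (u has_vector_derivative f (s, u s)) (at s within {0..})" for u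
      unfolding c.sol_def
    proof
      fix s assume s: "s \<in> {0..t}"
      have "(u has_vector_derivative f (s, u s)) (at s within {0..})" using that s by simp
      then show "(u has_vector_derivative f (s, u s)) (at s within {0..t})"
        by (rule has_vector_derivative_within_subset) auto
    qed
    have s1: "c.sol t u1" by (rule solT[OF u1_sol])
    have s2: "c.sol t u2" by (rule solT[OF u2_sol])
    define d where "d = u1 0 - u2 0"
    have G: "\<forall>s\<in>{0..1}. \<exists>y. c.sol t y \<and> y 0 = u2 0 + s *\<^sub>R d"
      by (rule c.global[OF t s2 refl])
    define X where "X s = (SOME y. c.sol t y \<and> y 0 = u2 0 + s *\<^sub>R d)" for s
    have X: "c.sol t (X s) \<and> X s 0 = u2 0 + s *\<^sub>R d" if "s \<in> {0..1}" for s
    proof -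
      have "\<exists>y. c.sol t y \<and> y 0 = u2 0 + s *\<^sub>R d" using G that by blast
      then show ?thesis unfolding X_def by (rule someI_ex)
    qed
    have est: "\<forall>\<tau>\<in>{0..t}. norm (X 1 \<tau> - X 0 \<tau>) \<le> C * C * exp (lam * \<tau>) * ((1 - 0) * norm d)"
      by (rule c.family_est[OF t _ X]) simp_all
    have tt: "t \<in> {0..t}" using t by simp
    have X1: "X 1 t = u1 t"
      by (rule c.sol_unique[OF s1 _ _ tt]) (use X[of 1] d_def in auto)
    have X0: "X 0 t = u2 t"
      by (rule c.sol_unique[OF s2 _ _ tt]) (use X[of 0] in auto)
    show "norm (u1 t - u2 t) \<le> C\<^sup>2 * exp (lam * t) * norm (u1 0 - u2 0)"
    proof -
      have "norm (X 1 t - X 0 t) \<le> C * C * exp (lam * t) * ((1 - 0) * norm d)" using est tt by blast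
      then show ?thesis using X1 X0 unfolding d_def by (simp add: power2_eq_square)
    qed
  qed
qed


end
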